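(* Consider the ADEPT-type cluster-randomized SMART of the context with common cluster size $m$ and a scalar cluster-level baseline covariate $X_i$ with $E[X_i]=0$ and $0<\mathrm{Var}(X_i)<\infty$. Fix $b_2\in\{1,-1\}$. Assume: (a) consistency of potential outcomes; (b) correct mean model: $E_{a_1,a_2}[Y_{ij}\mid X_i]=\beta_{(a_1,a_2)}+\eta X_i$ for $(a_1,a_2)\in\{(1,b_2),(-1,\cdot)\}$; (c) $\mathrm{Cov}_{1,b_2}(\mathbf Y_i)=\mathrm{Cov}_{-1,\cdot}(\mathbf Y_i)=\sigma^2\mathrm{Exch}_m(\rho)$; (d) $E_{1,b_2}[\mathbf e_i\mathbf e_i^T\mid R_i=0]\preceq E_{1,b_2}[\mathbf e_i\mathbf e_i^T]$ in the Loewner order, with $\mathbf e_i=\mathbf Y_i-(\beta_{(1,b_2)}+\eta X_i)1_m$. Let $c=\eta^2\mathrm{Var}(X_i)/\sigma^2$ denote $\mathrm{Cor}^2(Y_{ij},X_i)$ and $\rho^*=(\rho-c)/(1-c)$. Then $$\tau^2(1,b_2)\le\frac{2(2-p_1)\sigma^2(1-c)[1+(m-1)\rho^*]}{m},\qquad \tau^2(-1,\cdot)=\frac{2\sigma^2(1-c)[1+(m-1)\rho^*]}{m},$$ and, for any $\delta>0$ and $\alpha,\beta\in(0,1)$, $$\frac{(z_\beta+z_{\alpha/2})^2\big(\tau^2(1,b_2)+\tau^2(-1,\cdot)\big)}{\delta^2\sigma^2}\le\frac{4(z_\beta+z_{\alpha/2})^2}{m\delta^2}\,(1+(m-1)\rho^*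 )\Big(1+\frac{1-p_1}{2}\Big)[1-c].$$
   Context: ADEPT-type cluster-randomized SMART. There are $N$ i.i.d. clusters, each with $m$ individuals and outcome vector $\mathbf Y_i\in\mathbb R^m$. A scalar baseline covariate $X_i$ is measured before randomization. - Stage 1: $A_{1i}\in\{1,-1\}$ is assigned with probability $1/2$ each. - A response indicator $R_i\in\{0,1\}$ is then observed, with $p_1=\Pr(R_i=1\mid A_{1i}=1)$. - Stage 2: only clusters with $A_{1i}=1,R_i=0$ are re-randomized, to $A_{2i}\in\{1,-1\}$ with probability $1/2$ each. The embedded DTRs are $(1,1)$, $(1,-1)$ and $(-1,\cdot)$. - A cluster with $A_{1i}=-1$ is consistent with $(-1,\cdot)$. - A cluster with $A_{1i}=1,R_i=1$ is consistent with both $(1,\pm1)$. - A cluster with $A_{1i}=1,R_i=0,A_{2i}=a_2$ is consistent with $(1,a_2)$. $I_i(a_1,a_2)$ is the corresponding consistency indicator. The known weights are $W_i=4$ if $A_{1i}=1,R_i=0$ and $W_i=2$ otherwise. $E_{a_1,a_2}$ and $\mathrm{Cov}_{a_1,a_2}$ refer to the potential-outcome distribution had all clusters followed the DTR. The model $\beta_{(a_1,a_2)}+\eta X_i$, with one $\beta$ per embedded DTR and a common $\eta$, is fit by solving $$\sum_i\sum_{(a_1,a_2)}I_i(a_1,a_2)\,W_i\,D_{i,(a_1,a_2)}^TV^{-1}\big(\mathbf Y_i-(\beta_{(a_1,a_2)}+\eta X_i)1_m\big)=0,$$ where $D_{i,(a_1,a_2)}$ is the derivative of the mean vector with respect to $(\beta,\eta)$.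 The working covariance is exchangeable, $V=s^2\mathrm{Exch}_m(r)$ (positive definite); $\mathrm{Exch}_m(r)$ has unit diagonal and off-diagonal entries $r$. $\tau^2(a_1,a_2)$ is the diagonal entry corresponding to $\beta_{(a_1,a_2)}$ of the sandwich asymptotic covariance $J^{-1}AJ^{-1}$ of $\sqrt N(\hat\beta,\hat\eta)$. $z_\kappa$ is the upper $\kappa$ quantile of the standard normal distribution. *)

theory Defs
  imports "HOL-Probability.Probability"
begin

text \<open>Embedded DTRs of the ADEPT-type SMART, encoded as integer pairs
  (a1, a2); the DTR (-1, .) is encoded as (-1, 0).\<close>
definition dtrs :: "(int \<times> int) set" where
  "dtrs = {(1, 1), (1, -1), (-1, 0)}"

text \<open>Position of the parameters in the 4-dimensional parameter vector
  (beta_(1,1), beta_(1,-1), beta_(-1,.), eta).\<close>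
definition pidx :: "int \<times> int \<Rightarrow> 4" where
  "pidx d = (if d = (1, 1) then 0 else if d = (1, -1) then 1 else 2)"

definition eta_idx :: 4 where
  "eta_idx = 3"

definition consistent :: "int \<times> int \<Rightarrow> int \<Rightarrow> bool \<Rightarrow> int \<Rightarrow> bool" where
  "consistent d a1 r a2 \<longleftrightarrow> a1 = fst d \<and> (a1 = 1 \<longrightarrow> (r \<or> a2 = snd d))"

definition weight :: "int \<Rightarrow> bool \<Rightarrow> real" where
  "weight a1 r = (if a1 = 1 \<and> \<not> r then 4 else 2)"

definition exch :: "real \<Rightarrow> real^'m^'m" where
  "exch r = (\<chi> j k. if j = k then 1 else r)"

text \<open>Derivative (m x 4 matrix) of the mean vector (beta_d + eta x) 1_m w.r.t. theta.\<close>
definition Dmat :: "int \<times> int \<Rightarrow> real \<Rightarrow> real^4^'m" where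
  "Dmat d x = (\<chi> j k. if k = pidx d then 1 else if k = eta_idx then x else 0)"

definition est_fun :: "real^'m^'m \<Rightarrow> real^4 \<Rightarrow> int \<Rightarrow> bool \<Rightarrow> int \<Rightarrow> real \<Rightarrow> real^'m \<Rightarrow> real^4" where
  "est_fun V \<theta> a1 r a2 x y =
     (\<Sum>d\<in>dtrs. (if consistent d a1 r a2 then weight a1 r else 0) *\<^sub>R
        (transpose (Dmat d x) ** matrix_inv V *v (y - Dmat d x *v \<theta>)))"

text \<open>Minus the derivative of the estimating function w.r.t. theta.\<close>
definition bread_fun :: "real^'m^'m \<Rightarrow> int \<Rightarrow> bool \<Rightarrow> int \<Rightarrow> real \<Rightarrow> real^4^4" where
  "bread_fun V a1 r a2 x =
     (\<Sum>d\<in>dtrs. (if consistent d a1 r a2 then weight a1 r else 0) *\<^sub>R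
        (transpose (Dmat d x) ** matrix_inv V ** Dmat d x))"

definition sandwich_tau2 ::
  "'a measure \<Rightarrow> real^'m^'m \<Rightarrow> real^4 \<Rightarrow> ('a \<Rightarrow> int) \<Rightarrow> ('a \<Rightarrow> bool) \<Rightarrow> ('a \<Rightarrow> int)
    \<Rightarrow> ('a \<Rightarrow> real) \<Rightarrow> ('a \<Rightarrow> real^'m) \<Rightarrow> int \<times> int \<Rightarrow> real" where
  "sandwich_tau2 M V \<theta> A1 R A2 X Y d =
     (let J = (\<chi> k l. \<integral>\<omega>. bread_fun V (A1 \<omega>) (R \<omega>) (A2 \<omega>) (X \<omega>) $ k $ l \<partial>M);
          A = (\<chi> k l. \<integral>\<omega>. est_fun V \<theta> (A1 \<omega>) (R \<omega>) (A2 \<omega>) (X \<omega>) (Y \<omega>) $ k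
                          * est_fun V \<theta> (A1 \<omega>) (R \<omega>) (A2 \<omega>) (X \<omega>) (Y \<omega>) $ l \<partial>M);
          S = matrix_inv J ** A ** matrix_inv J
      in S $ pidx d $ pidx d)"

definition loewner_le :: "real^'n^'n \<Rightarrow> real^'n^'n \<Rightarrow> bool" where
  "loewner_le A B \<longleftrightarrow> (\<forall>v. v \<bullet> (A *v v) \<le> v \<bullet> (B *v v))"

definition z_upper :: "real \<Rightarrow> real" where
  "z_upper \<kappa> = (THE z. measure (density lborel std_normal_density) {z<..} = \<kappa>)"

definition pot_space :: "(int \<times> int \<Rightarrow> real^'m) measure" where
  "pot_space = PiM dtrs (\<lambda>_. borel)"

text \<open>Independence of two random variables with possibly different value types
  (the library's indep_var requires a common value type): the sigma-algebras
  they generate are independent.\<close>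
definition indep_rv :: "'a measure \<Rightarrow> 'b measure \<Rightarrow> ('a \<Rightarrow> 'b) \<Rightarrow> 'c measure \<Rightarrow> ('a \<Rightarrow> 'c) \<Rightarrow> bool" where
  "indep_rv M Ma A Mb B \<longleftrightarrow>
     A \<in> measurable M Ma \<and> B \<in> measurable M Mb \<and>
     prob_space.indep_set M {A -` S \<inter> space M | S. S \<in> sets Ma} {B -` S \<inter> space M | S. S \<in> sets Mb}"

end

theory Submission
  imports Defs
begin


lemma indep_rv_integral:
  fixes A :: "'a \<Rightarrow> int" and Z :: "'a \<Rightarrow> 'b" and f :: "'b \<Rightarrow> real"
  assumes P: "prob_space M" and I: "indep_rv M (count_space UNIV) A Mb Z"
  and f[measurable]: "f \<in> borel_measurable Mb"
  shows "(\<integral>\<omega>. indicator {\<omega>. A \<omega> = a} \<omega> * f (Z \<omega>) \<partial>M) = measure M {\<omega>\<in>space M. A \<omega> = a} * (\<integral>\<omega>. f (Z \<omega>) \<partial>M)"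
proof -
  interpret prob_space M by (rule P)
  have mA[measurable]: "A \<in> measurable M (count_space UNIV)" and mZ[measurable]: "Z \<in> measurable M Mb"
    and ind: "indep_set {A -` S \<inter> space M | S. S \<in> sets (count_space UNIV)} {Z -` S \<inter> space M | S. S \<in> sets Mb}"
    using I unfolding indep_rv_def by auto
  define E where "E = {\<omega>\<in>space M. A \<omega> = a}"
  have E: "E \<in> sets M" unfolding E_def by measurable
  have E2: "E \<in> {A -` S \<inter> space M | S. S \<in> sets (count_space UNIV)}"
    unfolding E_def by (rule CollectI, rule exI[of _ "{a}"]) auto
  have pr: "B \<in> sets Mb \<Longrightarrow> prob (E \<inter> (Z -` B \<inter> space M)) = prob E * prob (Z -` B \<inter> space M)" for B
    using ind E2 unfolding indep_sets2_eq by blast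
  define N1 where "N1 = distr (density M (\<lambda>x. ennreal (indicator E x))) Mb Z"
  define N2 where "N2 = density (distr M Mb Z) (\<lambda>_. prob E)"
  have "N1 = N2"
  proof (rule measure_eqI)
    show "sets N1 = sets N2" unfolding N1_def N2_def by simp
    fix B assume "B \<in> sets N1"
    then have B[measurable]: "B \<in> sets Mb" unfolding N1_def by simp
    have "emeasure N1 B = emeasure (density M (\<lambda>x. ennreal (indicator E x))) (Z -` B \<inter> space M)"
      unfolding N1_def by (subst emeasure_distr) auto
    also have "\<dots> = (\<integral>\<^sup>+x. indicator E x * indicator (Z -` B \<inter> space M) x \<partial>M)"
      by (subst emeasure_density) (use E in \<open>auto intro!: nn_integral_cong simp: mult.commute split: split_indicator\<close>)
    also have "\<dots> = (\<integral>\<^sup>+x. indicator (E \<inter> (Z -` B \<inter> space M)) x \<partial>M)"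
      by (auto intro!: nn_integral_cong split: split_indicator)
    also have "\<dots> = ennreal (prob E * prob (Z -` B \<inter> space M))"
      using pr[OF B] E by (subst nn_integral_indicator) (auto simp: emeasure_eq_measure)
    also have "\<dots> = emeasure N2 B"
      unfolding N2_def by (subst emeasure_density) (auto simp: nn_integral_cmult emeasure_distr emeasure_eq_measure ennreal_mult)
    finally show "emeasure N1 B = emeasure N2 B" .
  qed
  have "(\<integral>\<omega>. indicator {\<omega>. A \<omega> = a} \<omega> * f (Z \<omega>) \<partial>M) = (\<integral>\<omega>. indicator E \<omega> * f (Z \<omega>) \<partial>M)"
    by (intro Bochner_Integration.integral_cong refl) (auto simp: E_def split: split_indicator)
  also have "\<dots> = integral\<^sup>L N1 f"
    unfolding N1_def
    apply (subst integral_distr)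
      apply simp
     apply simp
    apply (subst integral_density[of "\<lambda>x. f (Z x)" M "indicator E"])
    using E by auto
  also have "\<dots> = integral\<^sup>L N2 f" by (simp add: \<open>N1 = N2\<close>)
  also have "\<dots> = prob E * (\<integral>\<omega>. f (Z \<omega>) \<partial>M)"
    unfolding N2_def by (subst integral_density) (auto simp: integral_distr)
  finally show ?thesis unfolding E_def .
qed



definition ak :: "int \<times> int \<Rightarrow> 4 \<Rightarrow> real \<Rightarrow> real" where
  "ak d k x = (if k = pidx d then 1 else if k = eta_idx then x else 0)"

lemma finite_dtrs: "finite dtrs" by (simp add: dtrs_def)

lemma pidx_ne_eta: "pidx d \<noteq> eta_idx"
  by (simp add: pidx_def eta_idx_def)

lemma pidx_inj: "d \<in> dtrs \<Longrightarrow> d' \<in> dtrs \<Longrightarrow> pidx d = pidx d' \<longleftrightarrow> d = d'"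
  by (auto simp: pidx_def dtrs_def)

lemma idx_cases: "k = eta_idx \<or> k = pidx (1,1) \<or> k = pidx (1,-1) \<or> k = pidx (-1,0)"
  using exhaust_4[of k] by (auto simp: pidx_def eta_idx_def)

lemma Dmat_nth: "Dmat d x $ j $ k = ak d k x"
  by (simp add: Dmat_def ak_def)

lemma Dmat_theta: "(Dmat d x *v \<theta>) $ i = \<theta> $ pidx d + x * \<theta> $ eta_idx"
proof -
  have "(Dmat d x *v \<theta>) $ i = (\<Sum>k\<in>UNIV. (if k = pidx d then \<theta> $ k else 0) + (if k = eta_idx then x * \<theta> $ k else 0))"
    unfolding matrix_vector_mult_def by (simp, rule sum.cong) (auto simp: Dmat_def pidx_ne_eta)
  also have "\<dots> = \<theta> $ pidx d + x * \<theta> $ eta_idx"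
    by (simp add: sum.distrib)
  finally show ?thesis .
qed

lemma est_comp:
  fixes V :: "real^'m^'m"
  assumes colsum: "\<And>k. (\<Sum>j\<in>UNIV. matrix_inv V $ j $ k) = cst"
  shows "(transpose (Dmat d x) ** matrix_inv V *v w) $ k = ak d k x * cst * (\<Sum>i\<in>UNIV. w $ i)"
proof -
  have "(transpose (Dmat d x) ** matrix_inv V *v w) $ k
      = (\<Sum>i\<in>UNIV. ak d k x * (\<Sum>j\<in>UNIV. matrix_inv V $ j $ i) * w $ i)"
    by (simp add: matrix_vector_mult_def matrix_matrix_mult_def transpose_def Dmat_nth
        sum_distrib_left sum_distrib_right mult.assoc)
  also have "\<dots> = ak d k x * cst * (\<Sum>i\<in>UNIV. w $ i)"
    by (simp add: colsum sum_distrib_left mult.assoc)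
  finally show ?thesis .
qed

lemma bread_comp:
  fixes V :: "real^'m^'m"
  assumes colsum: "\<And>k. (\<Sum>j\<in>UNIV. matrix_inv V $ j $ k) = cst"
  shows "(transpose (Dmat d x) ** matrix_inv V ** Dmat d x) $ k $ l = ak d k x * ak d l x * (real CARD('m) * cst)"
proof -
  have "(transpose (Dmat d x) ** matrix_inv V ** Dmat d x) $ k $ l
      = (\<Sum>i\<in>UNIV. ak d k x * (\<Sum>j\<in>UNIV. matrix_inv V $ j $ i) * ak d l x)"
    by (simp add: matrix_matrix_mult_def transpose_def Dmat_nth
        sum_distrib_left sum_distrib_right mult.assoc)
  also have "\<dots> = ak d k x * ak d l x * (real CARD('m) * cst)"
    by (simp add: colsum)
  finally show ?thesis .
qed

definition cw :: "int \<times> int \<Rightarrow> int \<Rightarrow> bool \<Rightarrow> int \<Rightarrow> real" where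
  "cw d a1 r a2 = (if consistent d a1 r a2 then weight a1 r else 0)"

lemma ak_pidx: "d \<in> dtrs \<Longrightarrow> d0 \<in> dtrs \<Longrightarrow> ak d (pidx d0) x = (if d = d0 then 1 else 0)"
  by (auto simp: ak_def pidx_inj pidx_ne_eta)

lemma est_fun_pidx:
  fixes V :: "real^'m^'m"
  assumes colsum: "\<And>k. (\<Sum>j\<in>UNIV. matrix_inv V $ j $ k) = cst" and d0: "d0 \<in> dtrs"
  shows "est_fun V \<theta> a1 r a2 x y $ pidx d0 = cw d0 a1 r a2 * cst * (\<Sum>i\<in>UNIV. y $ i - \<theta> $ pidx d0 - x * \<theta> $ eta_idx)"
proof -
  have "est_fun V \<theta> a1 r a2 x y $ pidx d0 =
     (\<Sum>d\<in>dtrs. cw d a1 r a2 * (if d = d0 then 1 else 0) * cst * (\<Sum>i\<in>UNIV. (y - Dmat d x *v \<theta>) $ i))"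
    unfolding est_fun_def
    by (simp add: est_comp[OF colsum] cw_def[symmetric], rule sum.cong, simp_all add: ak_pidx d0 mult.assoc)
  also have "\<dots> = cw d0 a1 r a2 * cst * (\<Sum>i\<in>UNIV. (y - Dmat d0 x *v \<theta>) $ i)"
    using d0 by (simp add: if_distrib if_distribR cong: if_cong) (simp add: finite_dtrs)
  also have "\<dots> = cw d0 a1 r a2 * cst * (\<Sum>i\<in>UNIV. y $ i - \<theta> $ pidx d0 - x * \<theta> $ eta_idx)"
    by (simp add: Dmat_theta algebra_simps)
  finally show ?thesis .
qed

lemma bread_fun_nth:
  fixes V :: "real^'m^'m"
  assumes colsum: "\<And>k. (\<Sum>j\<in>UNIV. matrix_inv V $ j $ k) = cst"
  shows "bread_fun V a1 r a2 x $ k $ l = (\<Sum>d\<in>dtrs. cw d a1 r a2 * (ak d k x * ak d l x)) * (real CARD('m) * cst)"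
  unfolding bread_fun_def by (simp add: bread_comp[OF colsum] cw_def[symmetric] sum_distrib_right mult.assoc)

lemma matrix_inv_eqI:
  fixes A B :: "real^'n^'n"
  assumes "A ** B = mat 1" "B ** A = mat 1"
  shows "matrix_inv A = B"
proof -
  have ex: "\<exists>A'. A ** A' = mat 1 \<and> A' ** A = mat 1" using assms by blast
  define C where "C = matrix_inv A"
  have C: "A ** C = mat 1 \<and> C ** A = mat 1"
    unfolding C_def matrix_inv_def by (rule someI_ex[OF ex])
  have "C = C ** (A ** B)" using assms by (simp add: matrix_mul_rid)
  also have "\<dots> = (C ** A) ** B" by (simp add: matrix_mul_assoc)
  also have "\<dots> = B" using C by (simp add: matrix_mul_lid)
  finally show ?thesis unfolding C_def .
qed

lemma sandwich_diag:
  fixes A :: "real^'n^'n" and jd :: "'n \<Rightarrow> real"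
  assumes nz: "\<And>k. jd k \<noteq> 0"
  shows "(matrix_inv (\<chi> k l. if k = l then jd k else 0) ** A ** matrix_inv (\<chi> k l. if k = l then jd k else 0)) $ p $ p
     = A $ p $ p / (jd p)\<^sup>2"
proof -
  define J :: "real^'n^'n" where "J = (\<chi> k l. if k = l then jd k else 0)"
  define Ji :: "real^'n^'n" where "Ji = (\<chi> k l. if k = l then 1 / jd k else 0)"
  have s1: "(\<Sum>k\<in>UNIV. (if i = k then jd i else 0) * (if k = j then 1 / jd k else 0)) = (if i = j then 1 else 0)" for i j
  proof -
    have "(\<Sum>k\<in>UNIV. (if i = k then jd i else 0) * (if k = j then 1 / jd k else 0))
        = (\<Sum>k\<in>UNIV. if k = i then (if i = j then 1 else 0) else 0)"
      by (rule sum.cong) (auto simp: nz)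
    then show ?thesis by simp
  qed
  have s2: "(\<Sum>k\<in>UNIV. (if i = k then 1 / jd i else 0) * (if k = j then jd k else 0)) = (if i = j then 1 else 0)" for i j
  proof -
    have "(\<Sum>k\<in>UNIV. (if i = k then 1 / jd i else 0) * (if k = j then jd k else 0))
        = (\<Sum>k\<in>UNIV. if k = i then (if i = j then 1 else 0) else 0)"
      by (rule sum.cong) (auto simp: nz)
    then show ?thesis by simp
  qed
  have "J ** Ji = mat 1" "Ji ** J = mat 1"
    unfolding J_def Ji_def matrix_matrix_mult_def mat_def
    by (simp_all only: vec_eq_iff vec_lambda_beta s1 s2) simp_all
  then have inv: "matrix_inv J = Ji" by (rule matrix_inv_eqI)
  have "(Ji ** A ** Ji) $ p $ p = A $ p $ p / (jd p)\<^sup>2"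
    unfolding Ji_def matrix_matrix_mult_def
    by (simp add: if_distrib if_distribR power2_eq_square cong: if_cong)
  then show ?thesis using inv unfolding J_def by simp
qed



lemma sum_exch_row: "(\<Sum>k\<in>UNIV. (if (j::'m::finite) = k then 1 else r)) = 1 + (real CARD('m) - 1) * (r::real)"
proof -
  have "(\<Sum>k\<in>UNIV. (if j = k then 1 else r)) = (\<Sum>k\<in>UNIV. r + (if j = k then 1 - r else 0))"
    by (rule sum.cong) auto
  also have "\<dots> = real CARD('m) * r + (1 - r)" by (simp add: sum.distrib)
  finally show ?thesis by (simp add: algebra_simps)
qed

lemma exch_ones: "(exch r :: real^'m^'m) *v (\<chi> i. 1) = (1 + (real CARD('m) - 1) * r) *\<^sub>R (\<chi> i. 1)"
  by (simp add: exch_def matrix_vector_mult_def vec_eq_iff sum_exch_row)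

lemma exch_colsum: "(\<Sum>i\<in>UNIV. (exch r :: real^'m^'m) $ i $ k) = 1 + (real CARD('m) - 1) * r"
proof -
  have "(\<Sum>i\<in>UNIV. (exch r :: real^'m^'m) $ i $ k) = (\<Sum>i\<in>UNIV. (if k = i then 1 else r))"
    by (rule sum.cong) (auto simp: exch_def)
  then show ?thesis by (simp add: sum_exch_row)
qed

lemma V_facts:
  fixes r s2 :: real
  assumes s2: "0 < s2" and pd: "\<forall>v::real^'m. v \<noteq> 0 \<longrightarrow> 0 < v \<bullet> (exch r *v v)"
  defines "V \<equiv> s2 *\<^sub>R (exch r :: real^'m^'m)"
  defines "lam \<equiv> s2 * (1 + (real CARD('m) - 1) * r)"
  shows "0 < lam" and "\<And>k. (\<Sum>j\<in>UNIV. matrix_inv V $ j $ k) = 1 / lam"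
proof -
  have "0 < ((\<chi> i. 1) :: real^'m) \<bullet> (exch r *v ((\<chi> i. 1) :: real^'m))"
  proof -
    have "((\<chi> i. 1) :: real^'m) \<noteq> 0" by (simp add: vec_eq_iff)
    then show ?thesis using pd by blast
  qed
  then have "0 < real CARD('m) * (1 + (real CARD('m) - 1) * r)"
    by (simp add: exch_ones inner_vec_def)
  then have pos: "0 < 1 + (real CARD('m) - 1) * r"
    by (simp add: zero_less_mult_iff)
  then show lp: "0 < lam" unfolding lam_def using s2 by simp
  have ker: "\<forall>x. V *v x = 0 \<longrightarrow> x = 0"
  proof (intro allI impI)
    fix x :: "real^'m" assume "V *v x = 0"
    moreover have "V *v x = s2 *\<^sub>R (exch r *v x)"
      by (simp add: V_def matrix_vector_mult_def vec_eq_iff sum_distrib_left mult.assoc)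
    ultimately have e: "exch r *v x = 0" using s2 by simp
    show "x = 0"
    proof (rule ccontr)
      assume "x \<noteq> 0" then have "0 < x \<bullet> (exch r *v x)" using pd by blast
      then show False using e by simp
    qed
  qed
  then obtain B where B: "B ** V = mat 1" using matrix_left_invertible_ker by blast
  then have B2: "V ** B = mat 1" using matrix_left_right_inverse by blast
  have inv: "matrix_inv V = B" by (rule matrix_inv_eqI[OF B2 B])
  fix k
  have "(\<Sum>i\<in>UNIV. (V ** B) $ i $ k) = 1"
    using B2 by (simp add: mat_def)
  moreover have "(\<Sum>i\<in>UNIV. (V ** B) $ i $ k) = (\<Sum>j\<in>UNIV. (\<Sum>i\<in>UNIV. V $ i $ j) * B $ j $ k)"
    unfolding matrix_matrix_mult_def by (simp add: sum_distrib_right) (rule sum.swap)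
  moreover have "\<And>j. (\<Sum>i\<in>UNIV. V $ i $ j) = lam"
    unfolding V_def lam_def by (simp add: exch_colsum flip: sum_distrib_left)
  ultimately have "lam * (\<Sum>j\<in>UNIV. B $ j $ k) = 1"
    by (simp add: sum_distrib_left)
  then show "(\<Sum>j\<in>UNIV. matrix_inv V $ j $ k) = 1 / lam" using lp inv
    by (simp add: field_simps)
qed



lemma integrable_bdd_mult:
  fixes f g :: "'a \<Rightarrow> real"
  assumes "integrable M f" "g \<in> borel_measurable M" "\<And>x. x \<in> space M \<Longrightarrow> \<bar>g x\<bar> \<le> B"
  shows "integrable M (\<lambda>x. g x * f x)"
proof (rule Bochner_Integration.integrable_bound[where f="\<lambda>x. B * f x"])
  show "integrable M (\<lambda>x. B * f x)" using assms(1) by simp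
  show "(\<lambda>x. g x * f x) \<in> borel_measurable M" using assms(1,2) by measurable
  show "AE x in M. norm (g x * f x) \<le> norm (B * f x)"
  proof (rule AE_I2)
    fix x assume "x \<in> space M"
    then have "\<bar>g x\<bar> \<le> B" by (rule assms(3))
    then have "\<bar>g x\<bar> * \<bar>f x\<bar> \<le> \<bar>B\<bar> * \<bar>f x\<bar>" by (intro mult_right_mono) auto
    then show "norm (g x * f x) \<le> norm (B * f x)" by (simp add: abs_mult)
  qed
qed

locale adept = prob_space M
  for M :: "'a measure" and X :: "'a \<Rightarrow> real" and A1 A2 :: "'a \<Rightarrow> int" and R R1 :: "'a \<Rightarrow> bool"
    and Yp :: "int \<times> int \<Rightarrow> 'a \<Rightarrow> real^'m" +
  assumes meas_X[measurable]: "X \<in> borel_measurable M"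
    and meas_A1[measurable]: "A1 \<in> measurable M (count_space UNIV)"
    and meas_A2[measurable]: "A2 \<in> measurable M (count_space UNIV)"
    and meas_R[measurable]: "R \<in> measurable M (count_space UNIV)"
    and meas_R1[measurable]: "R1 \<in> measurable M (count_space UNIV)"
    and A1_vals: "\<forall>\<omega>\<in>space M. A1 \<omega> = 1 \<or> A1 \<omega> = -1"
    and A1_prob: "measure M {\<omega>\<in>space M. A1 \<omega> = 1} = 1/2"
    and A2_vals: "\<forall>\<omega>\<in>space M. A2 \<omega> = 1 \<or> A2 \<omega> = -1"
    and A2_prob: "measure M {\<omega>\<in>space M. A2 \<omega> = 1} = 1/2"
    and A1_indep: "indep_rv M (count_space UNIV) A1
                     (borel \<Otimes>\<^sub>M count_space UNIV \<Otimes>\<^sub>M pot_space)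
                     (\<lambda>\<omega>. (X \<omega>, R1 \<omega>, (\<lambda>d\<in>dtrs. Yp d \<omega>)))"
    and A2_indep: "indep_rv M (count_space UNIV) A2
                     (count_space UNIV \<Otimes>\<^sub>M borel \<Otimes>\<^sub>M count_space UNIV \<Otimes>\<^sub>M pot_space)
                     (\<lambda>\<omega>. (A1 \<omega>, X \<omega>, R1 \<omega>, (\<lambda>d\<in>dtrs. Yp d \<omega>)))"
    and cons_R: "\<forall>\<omega>\<in>space M. A1 \<omega> = 1 \<longrightarrow> R \<omega> = R1 \<omega>"
begin

abbreviation "Mb1 \<equiv> (borel \<Otimes>\<^sub>M count_space UNIV \<Otimes>\<^sub>M (pot_space :: (int \<times> int \<Rightarrow> real^'m) measure))"

definition Z1 :: "'a \<Rightarrow> real \<times> bool \<times> (int \<times> int \<Rightarrow> real^'m)" where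
  "Z1 \<omega> = (X \<omega>, R1 \<omega>, (\<lambda>d\<in>dtrs. Yp d \<omega>))"

lemma Z1_meas[measurable]: "Z1 \<in> measurable M Mb1"
  using A1_indep unfolding indep_rv_def Z1_def by auto

lemma Z2_meas[measurable]: "(\<lambda>\<omega>. (A1 \<omega>, Z1 \<omega>)) \<in> measurable M (count_space UNIV \<Otimes>\<^sub>M Mb1)"
  using A2_indep unfolding indep_rv_def Z1_def by auto

lemma IA1: "f \<in> borel_measurable Mb1 \<Longrightarrow>
  (\<integral>\<omega>. indicator {\<omega>. A1 \<omega> = a} \<omega> * f (Z1 \<omega>) \<partial>M) = prob {\<omega>\<in>space M. A1 \<omega> = a} * (\<integral>\<omega>. f (Z1 \<omega>) \<partial>M)"
  using indep_rv_integral[OF prob_space_axioms A1_indep, of f a] unfolding Z1_def by simp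

lemma IA2: "f \<in> borel_measurable (count_space UNIV \<Otimes>\<^sub>M Mb1) \<Longrightarrow>
  (\<integral>\<omega>. indicator {\<omega>. A2 \<omega> = a} \<omega> * f (A1 \<omega>, Z1 \<omega>) \<partial>M) = prob {\<omega>\<in>space M. A2 \<omega> = a} * (\<integral>\<omega>. f (A1 \<omega>, Z1 \<omega>) \<partial>M)"
  using indep_rv_integral[OF prob_space_axioms A2_indep, of f a] unfolding Z1_def by simp

lemma PA1: "prob {\<omega>\<in>space M. A1 \<omega> = -1} = 1/2"
proof -
  have "{\<omega>\<in>space M. A1 \<omega> = -1} = space M - {\<omega>\<in>space M. A1 \<omega> = 1}" using A1_vals by auto
  then show ?thesis using A1_prob by (simp add: prob_compl)
qed

lemma PA2: "a2 = 1 \<or> a2 = -1 \<Longrightarrow> prob {\<omega>\<in>space M. A2 \<omega> = a2} = 1/2"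
proof -
  have "{\<omega>\<in>space M. A2 \<omega> = -1} = space M - {\<omega>\<in>space M. A2 \<omega> = 1}" using A2_vals by auto
  then have "prob {\<omega>\<in>space M. A2 \<omega> = -1} = 1/2" using A2_prob by (simp add: prob_compl)
  then show "a2 = 1 \<or> a2 = -1 \<Longrightarrow> ?thesis" using A2_prob by auto
qed

definition rI :: "bool \<Rightarrow> real" where "rI b = (if b then 1 else 0)"

lemma rI_meas[measurable]: "rI \<in> borel_measurable (count_space UNIV)" by simp

lemma key1:
  fixes f :: "_ \<Rightarrow> real"
  assumes f[measurable]: "f \<in> borel_measurable Mb1" and int: "integrable M (\<lambda>\<omega>. f (Z1 \<omega>))"
    and a2: "a2 = 1 \<or> a2 = -1"
  shows "(\<integral>\<omega>. indicator {\<omega>. A1 \<omega> = 1} \<omega> * (\<alpha> * rI (R1 \<omega>) + \<beta> * rI (\<not> R1 \<omega>) * indicator {\<omega>. A2 \<omega> = a2} \<omega>) * f (Z1 \<omega>) \<partial>M)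
     = \<alpha> / 2 * (\<integral>\<omega>. rI (R1 \<omega>) * f (Z1 \<omega>) \<partial>M) + \<beta> / 4 * (\<integral>\<omega>. rI (\<not> R1 \<omega>) * f (Z1 \<omega>) \<partial>M)"
proof -
  have R1Z: "R1 \<omega> = fst (snd (Z1 \<omega>))" for \<omega> by (simp add: Z1_def)
  have i1: "integrable M (\<lambda>\<omega>. indicator {\<omega>. A1 \<omega> = 1} \<omega> * (\<alpha> * rI (R1 \<omega>) * f (Z1 \<omega>)))"
    using integrable_bdd_mult[OF int, of "\<lambda>\<omega>. indicator {\<omega>. A1 \<omega> = 1} \<omega> * (\<alpha> * rI (R1 \<omega>))" "\<bar>\<alpha>\<bar>"]
    by (simp add: mult.assoc rI_def indicator_def)
  have i2: "integrable M (\<lambda>\<omega>. indicator {\<omega>. A2 \<omega> = a2} \<omega> * (indicator {\<omega>. A1 \<omega> = 1} \<omega> * (\<beta> * rI (\<not> R1 \<omega>) * f (Z1 \<omega>))))"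
    using integrable_bdd_mult[OF int, of "\<lambda>\<omega>. indicator {\<omega>. A2 \<omega> = a2} \<omega> * (indicator {\<omega>. A1 \<omega> = 1} \<omega> * (\<beta> * rI (\<not> R1 \<omega>)))" "\<bar>\<beta>\<bar>"]
    by (simp add: mult.assoc rI_def indicator_def)
  have "(\<integral>\<omega>. indicator {\<omega>. A1 \<omega> = 1} \<omega> * (\<alpha> * rI (R1 \<omega>) + \<beta> * rI (\<not> R1 \<omega>) * indicator {\<omega>. A2 \<omega> = a2} \<omega>) * f (Z1 \<omega>) \<partial>M)
     = (\<integral>\<omega>. indicator {\<omega>. A1 \<omega> = 1} \<omega> * (\<alpha> * rI (R1 \<omega>) * f (Z1 \<omega>))
          + indicator {\<omega>. A2 \<omega> = a2} \<omega> * (indicator {\<omega>. A1 \<omega> = 1} \<omega> * (\<beta> * rI (\<not> R1 \<omega>) * f (Z1 \<omega>))) \<partial>M)"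
    by (rule Bochner_Integration.integral_cong) (auto simp: algebra_simps)
  also have "\<dots> = (\<integral>\<omega>. indicator {\<omega>. A1 \<omega> = 1} \<omega> * (\<alpha> * rI (R1 \<omega>) * f (Z1 \<omega>)) \<partial>M)
      + (\<integral>\<omega>. indicator {\<omega>. A2 \<omega> = a2} \<omega> * (indicator {\<omega>. A1 \<omega> = 1} \<omega> * (\<beta> * rI (\<not> R1 \<omega>) * f (Z1 \<omega>))) \<partial>M)"
    using i1 i2 by (rule Bochner_Integration.integral_add)
  also have "(\<integral>\<omega>. indicator {\<omega>. A1 \<omega> = 1} \<omega> * (\<alpha> * rI (R1 \<omega>) * f (Z1 \<omega>)) \<partial>M)
      = \<alpha> / 2 * (\<integral>\<omega>. rI (R1 \<omega>) * f (Z1 \<omega>) \<partial>M)"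
    using IA1[of "\<lambda>z. \<alpha> * rI (fst (snd z)) * f z" 1] A1_prob by (simp add: R1Z[symmetric] mult.assoc)
  also have "(\<integral>\<omega>. indicator {\<omega>. A2 \<omega> = a2} \<omega> * (indicator {\<omega>. A1 \<omega> = 1} \<omega> * (\<beta> * rI (\<not> R1 \<omega>) * f (Z1 \<omega>))) \<partial>M)
      = 1/2 * (\<integral>\<omega>. indicator {\<omega>. A1 \<omega> = 1} \<omega> * (\<beta> * rI (\<not> R1 \<omega>) * f (Z1 \<omega>)) \<partial>M)"
    using IA2[of "\<lambda>(a,z). indicator {1} a * (\<beta> * rI (\<not> fst (snd z)) * f z)" a2] PA2[OF a2]
    by (simp add: R1Z[symmetric] indicator_def)
  also have "(\<integral>\<omega>. indicator {\<omega>. A1 \<omega> = 1} \<omega> * (\<beta> * rI (\<not> R1 \<omega>) * f (Z1 \<omega>)) \<partial>M)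
      = \<beta> / 2 * (\<integral>\<omega>. rI (\<not> R1 \<omega>) * f (Z1 \<omega>) \<partial>M)"
    using IA1[of "\<lambda>z. \<beta> * rI (\<not> fst (snd z)) * f z" 1] A1_prob by (simp add: R1Z[symmetric] mult.assoc)
  finally show ?thesis by simp
qed


definition CD :: "int \<times> int \<Rightarrow> 'a \<Rightarrow> real" where
  "CD d \<omega> = cw d (A1 \<omega>) (R \<omega>) (A2 \<omega>)"

lemma CD_meas[measurable]: "CD d \<in> borel_measurable M"
  unfolding CD_def cw_def consistent_def weight_def by measurable

lemma CD_pos: "\<omega> \<in> space M \<Longrightarrow> a2 = 1 \<or> a2 = -1 \<Longrightarrow>
   CD (1, a2) \<omega> = indicator {\<omega>. A1 \<omega> = 1} \<omega> * (2 * rI (R1 \<omega>) + 4 * rI (\<not> R1 \<omega>) * indicator {\<omega>. A2 \<omega> = a2} \<omega>)"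
  using cons_R A1_vals
  by (auto simp: CD_def cw_def consistent_def weight_def rI_def indicator_def)

lemma CD_pos2: "\<omega> \<in> space M \<Longrightarrow> a2 = 1 \<or> a2 = -1 \<Longrightarrow>
   (CD (1, a2) \<omega>)\<^sup>2 = indicator {\<omega>. A1 \<omega> = 1} \<omega> * (4 * rI (R1 \<omega>) + 16 * rI (\<not> R1 \<omega>) * indicator {\<omega>. A2 \<omega> = a2} \<omega>)"
  using cons_R A1_vals
  by (auto simp: CD_def cw_def consistent_def weight_def rI_def indicator_def)

lemma CD_neg: "\<omega> \<in> space M \<Longrightarrow> CD (-1, 0) \<omega> = 2 - 2 * indicator {\<omega>. A1 \<omega> = 1} \<omega>"
  using A1_vals by (auto simp: CD_def cw_def consistent_def weight_def indicator_def)

lemma CD_neg2: "\<omega> \<in> space M \<Longrightarrow> (CD (-1, 0) \<omega>)\<^sup>2 = 4 - 4 * indicator {\<omega>. A1 \<omega> = 1} \<omega>"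
  using A1_vals by (auto simp: CD_def cw_def consistent_def weight_def indicator_def)

lemma rI_sum: "rI b + rI (\<not> b) = 1" by (simp add: rI_def)

lemma int_rI_split:
  fixes f :: "_ \<Rightarrow> real"
  assumes f[measurable]: "f \<in> borel_measurable Mb1" and int: "integrable M (\<lambda>\<omega>. f (Z1 \<omega>))"
  shows "(\<integral>\<omega>. rI (R1 \<omega>) * f (Z1 \<omega>) \<partial>M) + (\<integral>\<omega>. rI (\<not> R1 \<omega>) * f (Z1 \<omega>) \<partial>M) = (\<integral>\<omega>. f (Z1 \<omega>) \<partial>M)"
proof -
  have i1: "integrable M (\<lambda>\<omega>. rI (R1 \<omega>) * f (Z1 \<omega>))"
    by (rule integrable_bdd_mult[OF int, where B=1]) (auto simp: rI_def)
  have i2: "integrable M (\<lambda>\<omega>. rI (\<not> R1 \<omega>) * f (Z1 \<omega>))"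
    by (rule integrable_bdd_mult[OF int, where B=1]) (auto simp: rI_def)
  have "(\<integral>\<omega>. rI (R1 \<omega>) * f (Z1 \<omega>) \<partial>M) + (\<integral>\<omega>. rI (\<not> R1 \<omega>) * f (Z1 \<omega>) \<partial>M)
      = (\<integral>\<omega>. rI (R1 \<omega>) * f (Z1 \<omega>) + rI (\<not> R1 \<omega>) * f (Z1 \<omega>) \<partial>M)"
    using i1 i2 by (rule Bochner_Integration.integral_add[symmetric])
  also have "\<dots> = (\<integral>\<omega>. f (Z1 \<omega>) \<partial>M)"
    by (rule Bochner_Integration.integral_cong) (auto simp: rI_def)
  finally show ?thesis .
qed

lemma int_neg:
  fixes f :: "_ \<Rightarrow> real" and c :: real
  assumes f[measurable]: "f \<in> borel_measurable Mb1" and int: "integrable M (\<lambda>\<omega>. f (Z1 \<omega>))"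
  shows "(\<integral>\<omega>. (c - c * indicator {\<omega>. A1 \<omega> = 1} \<omega>) * f (Z1 \<omega>) \<partial>M) = c / 2 * (\<integral>\<omega>. f (Z1 \<omega>) \<partial>M)"
proof -
  have i1: "integrable M (\<lambda>\<omega>. c * f (Z1 \<omega>))" using int by (rule Bochner_Integration.integrable_mult_right)
  have i2: "integrable M (\<lambda>\<omega>. indicator {\<omega>. A1 \<omega> = 1} \<omega> * (c * f (Z1 \<omega>)))"
    by (rule integrable_bdd_mult[OF i1, where B=1]) (auto simp: indicator_def)
  have "(\<integral>\<omega>. (c - c * indicator {\<omega>. A1 \<omega> = 1} \<omega>) * f (Z1 \<omega>) \<partial>M)
     = (\<integral>\<omega>. c * f (Z1 \<omega>) - indicator {\<omega>. A1 \<omega> = 1} \<omega> * (c * f (Z1 \<omega>)) \<partial>M)"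
    by (rule Bochner_Integration.integral_cong) (auto simp: algebra_simps)
  also have "\<dots> = (\<integral>\<omega>. c * f (Z1 \<omega>) \<partial>M) - (\<integral>\<omega>. indicator {\<omega>. A1 \<omega> = 1} \<omega> * (c * f (Z1 \<omega>)) \<partial>M)"
    using i1 i2 by (rule Bochner_Integration.integral_diff)
  also have "(\<integral>\<omega>. indicator {\<omega>. A1 \<omega> = 1} \<omega> * (c * f (Z1 \<omega>)) \<partial>M) = 1/2 * (\<integral>\<omega>. c * f (Z1 \<omega>) \<partial>M)"
    using IA1[of "\<lambda>z. c * f z" 1] A1_prob by simp
  finally show ?thesis by simp
qed

lemma E_CD:
  fixes f :: "_ \<Rightarrow> real"
  assumes f[measurable]: "f \<in> borel_measurable Mb1" and int: "integrable M (\<lambda>\<omega>. f (Z1 \<omega>))"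
    and d: "d \<in> dtrs"
  shows "(\<integral>\<omega>. CD d \<omega> * f (Z1 \<omega>) \<partial>M) = (\<integral>\<omega>. f (Z1 \<omega>) \<partial>M)"
proof -
  consider "d = (1, 1)" | "d = (1, -1)" | "d = (-1, 0)" using d by (auto simp: dtrs_def)
  then show ?thesis
  proof cases
    case 3
    have "(\<integral>\<omega>. CD d \<omega> * f (Z1 \<omega>) \<partial>M) = (\<integral>\<omega>. (2 - 2 * indicator {\<omega>. A1 \<omega> = 1} \<omega>) * f (Z1 \<omega>) \<partial>M)"
      by (rule Bochner_Integration.integral_cong) (auto simp: 3 CD_neg)
    then show ?thesis using int_neg[OF f int, of 2] by simp
  next
    case 1
    have "(\<integral>\<omega>. CD d \<omega> * f (Z1 \<omega>) \<partial>M) = (\<integral>\<omega>. indicator {\<omega>. A1 \<omega> = 1} \<omega> * (2 * rI (R1 \<omega>) + 4 * rI (\<not> R1 \<omega>) * indicator {\<omega>. A2 \<omega> = 1} \<omega>) * f (Z1 \<omega>) \<partial>M)"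
      by (rule Bochner_Integration.integral_cong) (auto simp: 1 CD_pos)
    then show ?thesis using key1[OF f int, of 1 2 4] int_rI_split[OF f int] by simp
  next
    case 2
    have "(\<integral>\<omega>. CD d \<omega> * f (Z1 \<omega>) \<partial>M) = (\<integral>\<omega>. indicator {\<omega>. A1 \<omega> = 1} \<omega> * (2 * rI (R1 \<omega>) + 4 * rI (\<not> R1 \<omega>) * indicator {\<omega>. A2 \<omega> = -1} \<omega>) * f (Z1 \<omega>) \<partial>M)"
      by (rule Bochner_Integration.integral_cong) (auto simp: 2 CD_pos)
    then show ?thesis using key1[OF f int, of "-1" 2 4] int_rI_split[OF f int] by simp
  qed
qed

lemma E_CD2_pos:
  fixes f :: "_ \<Rightarrow> real"
  assumes f[measurable]: "f \<in> borel_measurable Mb1" and int: "integrable M (\<lambda>\<omega>. f (Z1 \<omega>))"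
    and a2: "a2 = 1 \<or> a2 = -1"
  shows "(\<integral>\<omega>. (CD (1, a2) \<omega>)\<^sup>2 * f (Z1 \<omega>) \<partial>M)
     = 2 * (\<integral>\<omega>. rI (R1 \<omega>) * f (Z1 \<omega>) \<partial>M) + 4 * (\<integral>\<omega>. rI (\<not> R1 \<omega>) * f (Z1 \<omega>) \<partial>M)"
proof -
  have "(\<integral>\<omega>. (CD (1, a2) \<omega>)\<^sup>2 * f (Z1 \<omega>) \<partial>M) = (\<integral>\<omega>. indicator {\<omega>. A1 \<omega> = 1} \<omega> * (4 * rI (R1 \<omega>) + 16 * rI (\<not> R1 \<omega>) * indicator {\<omega>. A2 \<omega> = a2} \<omega>) * f (Z1 \<omega>) \<partial>M)"
    by (rule Bochner_Integration.integral_cong) (auto simp: a2 CD_pos2)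
  then show ?thesis using key1[OF f int a2, of 4 16] by simp
qed

lemma E_CD2_neg:
  fixes f :: "_ \<Rightarrow> real"
  assumes f[measurable]: "f \<in> borel_measurable Mb1" and int: "integrable M (\<lambda>\<omega>. f (Z1 \<omega>))"
  shows "(\<integral>\<omega>. (CD (-1, 0) \<omega>)\<^sup>2 * f (Z1 \<omega>) \<partial>M) = 2 * (\<integral>\<omega>. f (Z1 \<omega>) \<partial>M)"
proof -
  have "(\<integral>\<omega>. (CD (-1, 0) \<omega>)\<^sup>2 * f (Z1 \<omega>) \<partial>M) = (\<integral>\<omega>. (4 - 4 * indicator {\<omega>. A1 \<omega> = 1} \<omega>) * f (Z1 \<omega>) \<partial>M)"
    by (rule Bochner_Integration.integral_cong) (auto simp: CD_neg2)
  then show ?thesis using int_neg[OF f int, of 4] by simp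
qed

end


lemma vec_nth_meas[measurable]: "(\<lambda>v::real^'n. v $ j) \<in> borel_measurable borel"
  by (intro borel_measurable_continuous_onI linear_continuous_on bounded_linear_vec_nth)

lemma L2_prod:
  fixes f g :: "'a \<Rightarrow> real"
  assumes "integrable M (\<lambda>x. (f x)\<^sup>2)" "integrable M (\<lambda>x. (g x)\<^sup>2)"
    and [measurable]: "f \<in> borel_measurable M" "g \<in> borel_measurable M"
  shows "integrable M (\<lambda>x. f x * g x)"
proof (rule Bochner_Integration.integrable_bound[where f="\<lambda>x. (f x)\<^sup>2 + (g x)\<^sup>2"])
  show "integrable M (\<lambda>x. (f x)\<^sup>2 + (g x)\<^sup>2)" using assms(1,2) by simp
  show "(\<lambda>x. f x * g x) \<in> borel_measurable M" by measurable
  show "AE x in M. norm (f x * g x) \<le> norm ((f x)\<^sup>2 + (g x)\<^sup>2)"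
  proof (rule AE_I2)
    fix x
    have h: "0 \<le> (\<bar>f x\<bar> - \<bar>g x\<bar>)\<^sup>2" by simp
    have "(\<bar>f x\<bar> - \<bar>g x\<bar>)\<^sup>2 = (f x)\<^sup>2 + (g x)\<^sup>2 - 2 * (\<bar>f x\<bar> * \<bar>g x\<bar>)"
      by (simp add: power2_diff)
    then have "2 * \<bar>f x * g x\<bar> \<le> (f x)\<^sup>2 + (g x)\<^sup>2" using h by (simp add: abs_mult)
    moreover have "0 \<le> \<bar>f x * g x\<bar>" by simp
    ultimately have "\<bar>f x * g x\<bar> \<le> (f x)\<^sup>2 + (g x)\<^sup>2" by linarith
    then show "norm (f x * g x) \<le> norm ((f x)\<^sup>2 + (g x)\<^sup>2)" by simp
  qed
qed

lemma L2_add: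
  fixes f g :: "'a \<Rightarrow> real"
  assumes "integrable M (\<lambda>x. (f x)\<^sup>2)" "integrable M (\<lambda>x. (g x)\<^sup>2)"
    and [measurable]: "f \<in> borel_measurable M" "g \<in> borel_measurable M"
  shows "integrable M (\<lambda>x. (f x + g x)\<^sup>2)"
proof -
  have "integrable M (\<lambda>x. f x * g x)" by (rule L2_prod) fact+
  then have "integrable M (\<lambda>x. (f x)\<^sup>2 + (g x)\<^sup>2 + 2 * (f x * g x))" using assms(1,2) by simp
  then show ?thesis by (simp add: power2_sum mult.assoc)
qed

lemma L2_int:
  fixes f :: "'a \<Rightarrow> real"
  assumes "finite_measure M" "integrable M (\<lambda>x. (f x)\<^sup>2)" and [measurable]: "f \<in> borel_measurable M"
  shows "integrable M f"
proof (rule Bochner_Integration.integrable_bound[where f="\<lambda>x. 1 + (f x)\<^sup>2"])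
  interpret finite_measure M by fact
  show "integrable M (\<lambda>x. 1 + (f x)\<^sup>2)" using assms(2) by simp
  show "f \<in> borel_measurable M" by measurable
  show "AE x in M. norm (f x) \<le> norm (1 + (f x)\<^sup>2)"
  proof (rule AE_I2)
    fix x
    have "\<bar>f x\<bar> \<le> 1 + (f x)\<^sup>2"
    proof (cases "\<bar>f x\<bar> \<le> 1")
      case True then show ?thesis by (smt (verit) zero_le_power2)
    next
      case False
      then have "1 \<le> \<bar>f x\<bar>" by simp
      then have "\<bar>f x\<bar> * 1 \<le> \<bar>f x\<bar> * \<bar>f x\<bar>" by (intro mult_left_mono) auto
      moreover have "\<bar>f x\<bar> * \<bar>f x\<bar> = (f x)\<^sup>2" by (simp add: power2_eq_square)
      ultimately show ?thesis by linarith
    qed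
    then show "norm (f x) \<le> norm (1 + (f x)\<^sup>2)" by simp
  qed
qed

locale adept2 = adept M X A1 A2 R R1 Yp
  for M :: "'a measure" and X :: "'a \<Rightarrow> real" and A1 A2 :: "'a \<Rightarrow> int" and R R1 :: "'a \<Rightarrow> bool"
    and Yp :: "int \<times> int \<Rightarrow> 'a \<Rightarrow> real^'m" +
  fixes \<beta> :: "int \<times> int \<Rightarrow> real" and \<eta> \<sigma>2 \<rho> :: real and b2 :: int
  assumes meas_Yp[measurable]: "\<And>d. d \<in> dtrs \<Longrightarrow> Yp d \<in> borel_measurable M"
    and b2: "b2 = 1 \<or> b2 = -1"
    and X_sq_int: "integrable M (\<lambda>\<omega>. (X \<omega>)\<^sup>2)"
    and X_mean: "(\<integral>\<omega>. X \<omega> \<partial>M) = 0"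
    and mean_model: "\<And>d j. d \<in> {(1, b2), (-1, 0)} \<Longrightarrow>
        AE \<omega> in M. real_cond_exp M (vimage_algebra (space M) X borel) (\<lambda>\<omega>. Yp d \<omega> $ j) \<omega>
                    = \<beta> d + \<eta> * X \<omega>"
    and Y_sq_int: "\<And>d j. d \<in> {(1, b2), (-1, 0)} \<Longrightarrow> integrable M (\<lambda>\<omega>. (Yp d \<omega> $ j)\<^sup>2)"
    and cov: "\<And>d j k. d \<in> {(1, b2), (-1, 0)} \<Longrightarrow>
        (\<integral>\<omega>. (Yp d \<omega> $ j - (\<integral>\<omega>'. Yp d \<omega>' $ j \<partial>M))
             * (Yp d \<omega> $ k - (\<integral>\<omega>'. Yp d \<omega>' $ k \<partial>M)) \<partial>M) = \<sigma>2 * (exch \<rho> :: real^'m^'m) $ j $ k"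
begin

abbreviation "FX \<equiv> vimage_algebra (space M) X borel"

lemma dD: "d \<in> {(1, b2), (-1, 0)} \<Longrightarrow> d \<in> dtrs" using b2 by (auto simp: dtrs_def)

lemma Ypj_meas[measurable]: "d \<in> dtrs \<Longrightarrow> (\<lambda>\<omega>. Yp d \<omega> $ j) \<in> borel_measurable M"
  by measurable

lemma X_int: "integrable M X"
  by (rule L2_int[OF _ X_sq_int]) (auto intro: finite_measure_axioms)

lemma Y_int: assumes d: "d \<in> {(1, b2), (-1, 0)}" shows "integrable M (\<lambda>\<omega>. Yp d \<omega> $ j)"
  using dD[OF d] by (intro L2_int[OF _ Y_sq_int[OF d]]) (auto intro: finite_measure_axioms)

lemma XY_int: assumes d: "d \<in> {(1, b2), (-1, 0)}" shows "integrable M (\<lambda>\<omega>. X \<omega> * Yp d \<omega> $ j)"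
  using dD[OF d] by (intro L2_prod[OF X_sq_int Y_sq_int[OF d]]) auto

lemma YY_int: assumes d: "d \<in> {(1, b2), (-1, 0)}" shows "integrable M (\<lambda>\<omega>. Yp d \<omega> $ j * Yp d \<omega> $ k)"
  using dD[OF d] by (intro L2_prod[OF Y_sq_int[OF d] Y_sq_int[OF d]]) auto

sublocale FXs: finite_measure_subalgebra M FX
proof
  show "subalgebra M FX"
    unfolding subalgebra_def
  proof
    show "sets FX \<subseteq> sets M"
      using meas_X by (subst sets_vimage_algebra2) (auto simp: measurable_def)
  qed simp
qed

lemma X_FX[measurable]: "X \<in> borel_measurable FX"
  by (rule measurable_vimage_algebra1) auto

definition EX2 where "EX2 = (\<integral>\<omega>. (X \<omega>)\<^sup>2 \<partial>M)"

lemma EY: assumes d: "d \<in> {(1, b2), (-1, 0)}" shows "(\<integral>\<omega>. Yp d \<omega> $ j \<partial>M) = \<beta> d"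
proof -
  have "(\<integral>\<omega>. Yp d \<omega> $ j \<partial>M) = (\<integral>\<omega>. real_cond_exp M FX (\<lambda>\<omega>. Yp d \<omega> $ j) \<omega> \<partial>M)"
    using FXs.real_cond_exp_int(2)[OF Y_int[OF d]] by simp
  also have "\<dots> = (\<integral>\<omega>. \<beta> d + \<eta> * X \<omega> \<partial>M)"
    by (rule integral_cong_AE) (use mean_model[OF d] dD[OF d] in auto)
  also have "\<dots> = \<beta> d" using X_int X_mean by (simp add: prob_space)
  finally show ?thesis .
qed

lemma EXY: assumes d: "d \<in> {(1, b2), (-1, 0)}" shows "(\<integral>\<omega>. X \<omega> * Yp d \<omega> $ j \<partial>M) = \<eta> * EX2"
proof -
  have "(\<integral>\<omega>. X \<omega> * Yp d \<omega> $ j \<partial>M) = (\<integral>\<omega>. X \<omega> * real_cond_exp M FX (\<lambda>\<omega>. Yp d \<omega> $ j) \<omega> \<partial>M)"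
    using FXs.real_cond_exp_intg(2)[OF XY_int[OF d] X_FX] dD[OF d] by simp
  also have "\<dots> = (\<integral>\<omega>. \<beta> d * X \<omega> + \<eta> * (X \<omega>)\<^sup>2 \<partial>M)"
  proof (rule integral_cong_AE)
    show "AE \<omega> in M. X \<omega> * real_cond_exp M FX (\<lambda>\<omega>. Yp d \<omega> $ j) \<omega> = \<beta> d * X \<omega> + \<eta> * (X \<omega>)\<^sup>2"
      using mean_model[OF d, of j] by eventually_elim (simp add: algebra_simps power2_eq_square)
  qed (use dD[OF d] in auto)
  also have "\<dots> = \<eta> * EX2" using X_int X_mean X_sq_int by (simp add: EX2_def)
  finally show ?thesis .
qed

definition ee :: "int \<times> int \<Rightarrow> 'm \<Rightarrow> 'a \<Rightarrow> real" where
  "ee d j \<omega> = Yp d \<omega> $ j - \<beta> d - \<eta> * X \<omega>"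

definition Se :: "int \<times> int \<Rightarrow> 'a \<Rightarrow> real" where
  "Se d \<omega> = (\<Sum>j\<in>UNIV. ee d j \<omega>)"

lemma ee_meas[measurable]: "d \<in> dtrs \<Longrightarrow> ee d j \<in> borel_measurable M"
  unfolding ee_def by measurable

lemma Se_meas[measurable]: "d \<in> dtrs \<Longrightarrow> Se d \<in> borel_measurable M"
  unfolding Se_def by measurable

lemma ee_sq_int: assumes d: "d \<in> {(1, b2), (-1, 0)}" shows "integrable M (\<lambda>\<omega>. (ee d j \<omega>)\<^sup>2)"
proof -
  have c: "integrable M (\<lambda>\<omega>. (- \<beta> d)\<^sup>2)" by simp
  have x: "integrable M (\<lambda>\<omega>. (- \<eta> * X \<omega>)\<^sup>2)" using X_sq_int by (simp add: power_mult_distrib)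
  have "integrable M (\<lambda>\<omega>. (- \<beta> d + - \<eta> * X \<omega>)\<^sup>2)" by (rule L2_add[OF c x]) auto
  then have "integrable M (\<lambda>\<omega>. (Yp d \<omega> $ j + (- \<beta> d + - \<eta> * X \<omega>))\<^sup>2)"
    using dD[OF d] by (intro L2_add[OF Y_sq_int[OF d]]) auto
  moreover have "(\<lambda>\<omega>. (ee d j \<omega>)\<^sup>2) = (\<lambda>\<omega>. (Yp d \<omega> $ j + (- \<beta> d + - \<eta> * X \<omega>))\<^sup>2)"
    by (rule ext, simp add: ee_def, algebra)
  ultimately show ?thesis by simp
qed

lemma ee_prod_int: assumes d: "d \<in> {(1, b2), (-1, 0)}" shows "integrable M (\<lambda>\<omega>. ee d j \<omega> * ee d k \<omega>)"
  using dD[OF d] by (intro L2_prod[OF ee_sq_int[OF d] ee_sq_int[OF d]]) auto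

lemma Yc_int: assumes d: "d \<in> {(1, b2), (-1, 0)}"
  shows "integrable M (\<lambda>\<omega>. (Yp d \<omega> $ j - \<beta> d) * (Yp d \<omega> $ k - \<beta> d))"
proof -
  have "integrable M (\<lambda>\<omega>. (Yp d \<omega> $ j + - \<beta> d)\<^sup>2)" for j
    using dD[OF d] by (intro L2_add[OF Y_sq_int[OF d]]) auto
  then show ?thesis using dD[OF d] by (intro L2_prod) auto
qed

lemma Eee: assumes d: "d \<in> {(1, b2), (-1, 0)}"
  shows "(\<integral>\<omega>. ee d j \<omega> * ee d k \<omega> \<partial>M) = \<sigma>2 * (exch \<rho> :: real^'m^'m) $ j $ k - \<eta>\<^sup>2 * EX2"
proof -
  have "(\<integral>\<omega>. ee d j \<omega> * ee d k \<omega> \<partial>M) = (\<integral>\<omega>. (Yp d \<omega> $ j - \<beta> d) * (Yp d \<omega> $ k - \<beta> d)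
      - \<eta> * (X \<omega> * Yp d \<omega> $ k) - \<eta> * (X \<omega> * Yp d \<omega> $ j) + 2 * \<eta> * \<beta> d * X \<omega> + \<eta>\<^sup>2 * (X \<omega>)\<^sup>2 \<partial>M)"
    by (rule Bochner_Integration.integral_cong) (auto simp: ee_def algebra_simps power2_eq_square)
  also have "\<dots> = (\<integral>\<omega>. (Yp d \<omega> $ j - \<beta> d) * (Yp d \<omega> $ k - \<beta> d) \<partial>M)
      - \<eta> * (\<integral>\<omega>. X \<omega> * Yp d \<omega> $ k \<partial>M) - \<eta> * (\<integral>\<omega>. X \<omega> * Yp d \<omega> $ j \<partial>M)
      + 2 * \<eta> * \<beta> d * (\<integral>\<omega>. X \<omega> \<partial>M) + \<eta>\<^sup>2 * (\<integral>\<omega>. (X \<omega>)\<^sup>2 \<partial>M)"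
    using Yc_int[OF d, of j k] XY_int[OF d, of j] XY_int[OF d, of k] X_int X_sq_int
    by simp
  also have "(\<integral>\<omega>. (Yp d \<omega> $ j - \<beta> d) * (Yp d \<omega> $ k - \<beta> d) \<partial>M) = \<sigma>2 * (exch \<rho> :: real^'m^'m) $ j $ k"
    using cov[OF d, of j k] by (simp add: EY[OF d])
  finally show ?thesis by (simp add: EXY[OF d] X_mean EX2_def power2_eq_square)
qed

lemma ESe_gen:
  assumes d: "d \<in> {(1, b2), (-1, 0)}" and g[measurable]: "g \<in> borel_measurable M" and gb: "\<And>\<omega>. \<omega> \<in> space M \<Longrightarrow> \<bar>g \<omega>\<bar> \<le> 1"
  shows "(\<integral>\<omega>. g \<omega> * (Se d \<omega>)\<^sup>2 \<partial>M) = (\<Sum>j\<in>UNIV. \<Sum>k\<in>UNIV. \<integral>\<omega>. g \<omega> * (ee d j \<omega> * ee d k \<omega>) \<partial>M)"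
proof -
  have i: "integrable M (\<lambda>\<omega>. g \<omega> * (ee d j \<omega> * ee d k \<omega>))" for j k
    by (rule integrable_bdd_mult[OF ee_prod_int[OF d] g gb])
  have "(\<integral>\<omega>. g \<omega> * (Se d \<omega>)\<^sup>2 \<partial>M) = (\<integral>\<omega>. (\<Sum>j\<in>UNIV. \<Sum>k\<in>UNIV. g \<omega> * (ee d j \<omega> * ee d k \<omega>)) \<partial>M)"
    unfolding Se_def power2_eq_square sum_product by (simp add: sum_distrib_left)
  also have "\<dots> = (\<Sum>j\<in>UNIV. \<Sum>k\<in>UNIV. \<integral>\<omega>. g \<omega> * (ee d j \<omega> * ee d k \<omega>) \<partial>M)"
    using i by (simp add: Bochner_Integration.integral_sum)
  finally show ?thesis .
qed

lemma ESe: assumes d: "d \<in> {(1, b2), (-1, 0)}"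
  shows "(\<integral>\<omega>. (Se d \<omega>)\<^sup>2 \<partial>M) = \<sigma>2 * real CARD('m) * (1 + (real CARD('m) - 1) * \<rho>) - (real CARD('m))\<^sup>2 * \<eta>\<^sup>2 * EX2"
proof -
  have "(\<integral>\<omega>. (Se d \<omega>)\<^sup>2 \<partial>M) = (\<integral>\<omega>. 1 * (Se d \<omega>)\<^sup>2 \<partial>M)" by simp
  also have "\<dots> = (\<Sum>j\<in>UNIV. \<Sum>k\<in>UNIV. \<sigma>2 * (exch \<rho> :: real^'m^'m) $ j $ k - \<eta>\<^sup>2 * EX2)"
    by (subst ESe_gen[OF d]) (simp_all add: Eee[OF d])
  also have "\<dots> = (\<Sum>j::'m\<in>UNIV. \<sigma>2 * (1 + (real CARD('m) - 1) * \<rho>) - real CARD('m) * (\<eta>\<^sup>2 * EX2))"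
    by (simp add: sum_subtractf exch_def flip: sum_distrib_left) (simp add: sum_exch_row right_diff_distrib mult.left_commute)
  also have "\<dots> = \<sigma>2 * real CARD('m) * (1 + (real CARD('m) - 1) * \<rho>) - (real CARD('m))\<^sup>2 * \<eta>\<^sup>2 * EX2"
    by (simp add: sum_subtractf power2_eq_square) (simp add: algebra_simps)
  finally show ?thesis .
qed

end



context adept2
begin

lemma Z1_fst[simp]: "fst (Z1 \<omega>) = X \<omega>" by (simp add: Z1_def)
lemma Z1_R1[simp]: "fst (snd (Z1 \<omega>)) = R1 \<omega>" by (simp add: Z1_def)
lemma Z1_Y: "d \<in> dtrs \<Longrightarrow> snd (snd (Z1 \<omega>)) d = Yp d \<omega>" by (simp add: Z1_def)

lemma XX_int: "integrable M (\<lambda>\<omega>. X \<omega> * X \<omega>)"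
  using X_sq_int by (simp add: power2_eq_square)

lemma ak_int: "integrable M (\<lambda>\<omega>. ak d k (X \<omega>) * ak d l (X \<omega>))"
  by (cases "k = pidx d"; cases "k = eta_idx"; cases "l = pidx d"; cases "l = eta_idx")
     (simp_all add: ak_def X_int XX_int)

lemma Eak: "(\<integral>\<omega>. ak d k (X \<omega>) * ak d l (X \<omega>) \<partial>M) =
   (if k = l then (if k = eta_idx then EX2 else if k = pidx d then 1 else 0) else 0)"
  using pidx_ne_eta[of d]
  by (cases "k = pidx d"; cases "k = eta_idx"; cases "l = pidx d"; cases "l = eta_idx")
     (simp_all add: ak_def X_mean EX2_def power2_eq_square prob_space)

lemma CD_bdd: "\<bar>CD d \<omega>\<bar> \<le> 4"
  by (simp add: CD_def cw_def weight_def)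

lemma sum_Eak: "(\<Sum>d\<in>dtrs. (if k = l then (if k = eta_idx then EX2 else if k = pidx d then 1 else 0) else (0::real)))
   = (if k = l then (if k = eta_idx then 3 * EX2 else 1) else 0)"
  using idx_cases[of k] by (auto simp: dtrs_def pidx_def eta_idx_def)

lemma J_eq:
  fixes V :: "real^'m^'m"
  assumes colsum: "\<And>k. (\<Sum>j\<in>UNIV. matrix_inv V $ j $ k) = cst"
  shows "(\<chi> k l. \<integral>\<omega>. bread_fun V (A1 \<omega>) (R \<omega>) (A2 \<omega>) (X \<omega>) $ k $ l \<partial>M)
     = (\<chi> k l. if k = l then real CARD('m) * cst * (if k = eta_idx then 3 * EX2 else 1) else 0)"
proof -
  have "(\<integral>\<omega>. bread_fun V (A1 \<omega>) (R \<omega>) (A2 \<omega>) (X \<omega>) $ k $ l \<partial>M)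
     = (if k = l then real CARD('m) * cst * (if k = eta_idx then 3 * EX2 else 1) else 0)" for k l
  proof -
    have i: "integrable M (\<lambda>\<omega>. CD d \<omega> * (ak d k (X \<omega>) * ak d l (X \<omega>)))" for d
      by (rule integrable_bdd_mult[OF ak_int CD_meas]) (rule CD_bdd)
    have "(\<integral>\<omega>. bread_fun V (A1 \<omega>) (R \<omega>) (A2 \<omega>) (X \<omega>) $ k $ l \<partial>M)
       = (\<integral>\<omega>. (\<Sum>d\<in>dtrs. CD d \<omega> * (ak d k (X \<omega>) * ak d l (X \<omega>))) * (real CARD('m) * cst) \<partial>M)"
      by (simp add: bread_fun_nth[OF colsum] CD_def)
    also have "\<dots> = (\<Sum>d\<in>dtrs. \<integral>\<omega>. CD d \<omega> * (ak d k (X \<omega>) * ak d l (X \<omega>)) \<partial>M) * (real CARD('m) * cst)"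
      using i by (simp add: Bochner_Integration.integral_sum)
    also have "\<dots> = (\<Sum>d\<in>dtrs. \<integral>\<omega>. ak d k (X \<omega>) * ak d l (X \<omega>) \<partial>M) * (real CARD('m) * cst)"
    proof -
      have "d \<in> dtrs \<Longrightarrow> (\<integral>\<omega>. CD d \<omega> * (ak d k (X \<omega>) * ak d l (X \<omega>)) \<partial>M) = (\<integral>\<omega>. ak d k (X \<omega>) * ak d l (X \<omega>) \<partial>M)" for d
        using E_CD[of "\<lambda>z. ak d k (fst z) * ak d l (fst z)" d] ak_int[of d k l]
        by (simp add: ak_def)
      then show ?thesis by simp
    qed
    also have "\<dots> = (if k = l then real CARD('m) * cst * (if k = eta_idx then 3 * EX2 else 1) else 0)"
      by (simp only: Eak sum_Eak) simp
    finally show ?thesis .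
  qed
  then show ?thesis by (simp add: vec_eq_iff)
qed


definition Sf :: "int \<times> int \<Rightarrow> real \<times> bool \<times> (int \<times> int \<Rightarrow> real^'m) \<Rightarrow> real" where
  "Sf d z = (\<Sum>j\<in>UNIV. snd (snd z) d $ j - \<beta> d - \<eta> * fst z)"

lemma Sf_meas[measurable]: "d \<in> dtrs \<Longrightarrow> Sf d \<in> borel_measurable Mb1"
  unfolding Sf_def pot_space_def by measurable

lemma Se_Z1: "d \<in> dtrs \<Longrightarrow> Sf d (Z1 \<omega>) = Se d \<omega>"
  by (simp add: Sf_def Se_def ee_def Z1_Y)

lemma Se_sq_int: assumes d: "d \<in> {(1, b2), (-1, 0)}" shows "integrable M (\<lambda>\<omega>. (Se d \<omega>)\<^sup>2)"
proof -
  have "integrable M (\<lambda>\<omega>. \<Sum>j\<in>UNIV. \<Sum>k\<in>UNIV. ee d j \<omega> * ee d k \<omega>)"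
    using ee_prod_int[OF d] by simp
  then show ?thesis unfolding Se_def power2_eq_square sum_product .
qed

lemma Se_sq_int_g: assumes d: "d \<in> {(1, b2), (-1, 0)}" shows "integrable M (\<lambda>\<omega>. (Sf d (Z1 \<omega>))\<^sup>2)"
  using Se_sq_int[OF d] dD[OF d] by (simp add: Se_Z1)

lemma A_entry:
  fixes V :: "real^'m^'m" and Y :: "'a \<Rightarrow> real^'m"
  assumes colsum: "\<And>k. (\<Sum>j\<in>UNIV. matrix_inv V $ j $ k) = cst"
    and d: "d \<in> {(1, b2), (-1, 0)}"
    and cons_Y: "\<forall>\<omega>\<in>space M. \<forall>d\<in>dtrs. consistent d (A1 \<omega>) (R \<omega>) (A2 \<omega>) \<longrightarrow> Y \<omega> = Yp d \<omega>"
    and th1: "\<theta> $ pidx d = \<beta> d" and th2: "\<theta> $ eta_idx = \<eta>"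
  shows "(\<integral>\<omega>. est_fun V \<theta> (A1 \<omega>) (R \<omega>) (A2 \<omega>) (X \<omega>) (Y \<omega>) $ pidx d
             * est_fun V \<theta> (A1 \<omega>) (R \<omega>) (A2 \<omega>) (X \<omega>) (Y \<omega>) $ pidx d \<partial>M)
       = cst\<^sup>2 * (\<integral>\<omega>. (CD d \<omega>)\<^sup>2 * (Sf d (Z1 \<omega>))\<^sup>2 \<partial>M)"
proof -
  have dd: "d \<in> dtrs" by (rule dD[OF d])
  have pw: "est_fun V \<theta> (A1 \<omega>) (R \<omega>) (A2 \<omega>) (X \<omega>) (Y \<omega>) $ pidx d = CD d \<omega> * cst * Se d \<omega>"
    if w: "\<omega> \<in> space M" for \<omega>
  proof (cases "consistent d (A1 \<omega>) (R \<omega>) (A2 \<omega>)")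
    case True
    then have "Y \<omega> = Yp d \<omega>" using cons_Y w dd by blast
    then show ?thesis using True
      by (simp add: est_fun_pidx[OF colsum dd] CD_def Se_def ee_def th1 th2 mult.commute)
  next
    case False
    then show ?thesis by (simp add: est_fun_pidx[OF colsum dd] CD_def cw_def)
  qed
  have "(\<integral>\<omega>. est_fun V \<theta> (A1 \<omega>) (R \<omega>) (A2 \<omega>) (X \<omega>) (Y \<omega>) $ pidx d
             * est_fun V \<theta> (A1 \<omega>) (R \<omega>) (A2 \<omega>) (X \<omega>) (Y \<omega>) $ pidx d \<partial>M)
      = (\<integral>\<omega>. cst\<^sup>2 * ((CD d \<omega>)\<^sup>2 * (Sf d (Z1 \<omega>))\<^sup>2) \<partial>M)"
    by (rule Bochner_Integration.integral_cong) (simp_all add: pw Se_Z1[OF dd] power2_eq_square)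
  then show ?thesis by simp
qed

lemma tau_neg:
  fixes V :: "real^'m^'m" and Y :: "'a \<Rightarrow> real^'m"
  assumes colsum: "\<And>k. (\<Sum>j\<in>UNIV. matrix_inv V $ j $ k) = cst"
  shows "(\<integral>\<omega>. (CD (-1,0) \<omega>)\<^sup>2 * (Sf (-1,0) (Z1 \<omega>))\<^sup>2 \<partial>M) = 2 * (\<integral>\<omega>. (Se (-1,0) \<omega>)\<^sup>2 \<partial>M)"
proof -
  have d: "(-1,0) \<in> {(1, b2), (-1::int, 0::int)}" by simp
  show ?thesis using E_CD2_neg[of "\<lambda>z. (Sf (-1,0) z)\<^sup>2", OF _ Se_sq_int_g[OF d]] dD[OF d]
    by (simp add: Se_Z1)
qed

lemma tau_pos:
  shows "(\<integral>\<omega>. (CD (1,b2) \<omega>)\<^sup>2 * (Sf (1,b2) (Z1 \<omega>))\<^sup>2 \<partial>M)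
    = 2 * (\<integral>\<omega>. (Se (1,b2) \<omega>)\<^sup>2 \<partial>M) + 2 * (\<integral>\<omega>. rI (\<not> R1 \<omega>) * (Se (1,b2) \<omega>)\<^sup>2 \<partial>M)"
proof -
  have d: "(1,b2) \<in> {(1, b2), (-1::int, 0::int)}" by simp
  have m: "(\<lambda>z. (Sf (1,b2) z)\<^sup>2) \<in> borel_measurable Mb1" using dD[OF d] by measurable
  have "(\<integral>\<omega>. (CD (1,b2) \<omega>)\<^sup>2 * (Sf (1,b2) (Z1 \<omega>))\<^sup>2 \<partial>M)
    = 2 * (\<integral>\<omega>. rI (R1 \<omega>) * (Sf (1,b2) (Z1 \<omega>))\<^sup>2 \<partial>M) + 4 * (\<integral>\<omega>. rI (\<not> R1 \<omega>) * (Sf (1,b2) (Z1 \<omega>))\<^sup>2 \<partial>M)"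
    using E_CD2_pos[OF m Se_sq_int_g[OF d] b2] by simp
  moreover have "(\<integral>\<omega>. rI (R1 \<omega>) * (Sf (1,b2) (Z1 \<omega>))\<^sup>2 \<partial>M) + (\<integral>\<omega>. rI (\<not> R1 \<omega>) * (Sf (1,b2) (Z1 \<omega>))\<^sup>2 \<partial>M)
      = (\<integral>\<omega>. (Sf (1,b2) (Z1 \<omega>))\<^sup>2 \<partial>M)"
    using int_rI_split[OF m Se_sq_int_g[OF d]] by simp
  ultimately show ?thesis using dD[OF d] by (simp add: Se_Z1)
qed


lemma p1_eq: "measure M {\<omega>\<in>space M. A1 \<omega> = 1 \<and> R \<omega>} / measure M {\<omega>\<in>space M. A1 \<omega> = 1} = prob {\<omega>\<in>space M. R1 \<omega>}"
proof -
  have S: "{\<omega>\<in>space M. A1 \<omega> = 1 \<and> R \<omega>} = {\<omega>\<in>space M. A1 \<omega> = 1 \<and> R1 \<omega>}" using cons_R by auto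
  have "prob {\<omega>\<in>space M. A1 \<omega> = 1 \<and> R1 \<omega>} = (\<integral>\<omega>. indicator {\<omega>\<in>space M. A1 \<omega> = 1 \<and> R1 \<omega>} \<omega> \<partial>M)"
    by (subst Bochner_Integration.integral_indicator) auto
  also have "\<dots> = (\<integral>\<omega>. indicator {\<omega>. A1 \<omega> = 1} \<omega> * rI (R1 \<omega>) \<partial>M)"
    by (rule Bochner_Integration.integral_cong) (auto simp: indicator_def rI_def)
  also have "\<dots> = 1/2 * (\<integral>\<omega>. rI (R1 \<omega>) \<partial>M)"
    using IA1[of "\<lambda>z. rI (fst (snd z))" 1] A1_prob by simp
  also have "(\<integral>\<omega>. rI (R1 \<omega>) \<partial>M) = (\<integral>\<omega>. indicator {\<omega>\<in>space M. R1 \<omega>} \<omega> \<partial>M)"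
    by (rule Bochner_Integration.integral_cong) (auto simp: indicator_def rI_def)
  also have "\<dots> = prob {\<omega>\<in>space M. R1 \<omega>}"
    by (subst Bochner_Integration.integral_indicator) auto
  finally have "prob {\<omega>\<in>space M. A1 \<omega> = 1 \<and> R1 \<omega>} = 1/2 * prob {\<omega>\<in>space M. R1 \<omega>}" .
  then show ?thesis unfolding S A1_prob by simp
qed

lemma loew:
  assumes loewner: "loewner_le
        (\<chi> j k. (\<integral>\<omega>. indicator {\<omega>. \<not> R1 \<omega>} \<omega>
                    * ((Yp (1, b2) \<omega> - (\<beta> (1, b2) + \<eta> * X \<omega>) *\<^sub>R (\<chi> i. 1)) $ j
                       * (Yp (1, b2) \<omega> - (\<beta> (1, b2) + \<eta> * X \<omega>) *\<^sub>R (\<chi> i. 1)) $ k) \<partial>M)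
                 / measure M {\<omega>\<in>space M. \<not> R1 \<omega>})
        (\<chi> j k. (\<integral>\<omega>. (Yp (1, b2) \<omega> - (\<beta> (1, b2) + \<eta> * X \<omega>) *\<^sub>R (\<chi> i. 1)) $ j
                       * (Yp (1, b2) \<omega> - (\<beta> (1, b2) + \<eta> * X \<omega>) *\<^sub>R (\<chi> i. 1)) $ k \<partial>M))"
  shows "(\<integral>\<omega>. rI (\<not> R1 \<omega>) * (Se (1,b2) \<omega>)\<^sup>2 \<partial>M) \<le> (1 - prob {\<omega>\<in>space M. R1 \<omega>}) * (\<integral>\<omega>. (Se (1,b2) \<omega>)\<^sup>2 \<partial>M)"
proof -
  have d: "(1,b2) \<in> {(1, b2), (-1::int, 0::int)}" by simp
  define q where "q = measure M {\<omega>\<in>space M. \<not> R1 \<omega>}"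
  have q: "q = 1 - prob {\<omega>\<in>space M. R1 \<omega>}"
  proof -
    have "{\<omega>\<in>space M. \<not> R1 \<omega>} = space M - {\<omega>\<in>space M. R1 \<omega>}" by auto
    then show ?thesis unfolding q_def by (simp add: prob_compl)
  qed
  have eY: "(Yp (1, b2) \<omega> - (\<beta> (1, b2) + \<eta> * X \<omega>) *\<^sub>R (\<chi> i. 1)) $ j = ee (1,b2) j \<omega>" for \<omega> j
    by (simp add: ee_def)
  have ind: "indicator {\<omega>. \<not> R1 \<omega>} \<omega> = rI (\<not> R1 \<omega>)" for \<omega> by (simp add: indicator_def rI_def)
  have g1: "rI (\<not> R1 \<omega>) \<le> 1" "0 \<le> rI (\<not> R1 \<omega>)" for \<omega> by (simp_all add: rI_def)
  let ?v = "(\<chi> i. 1) :: real^'m"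
  have "?v \<bullet> ((\<chi> j k. (\<integral>\<omega>. rI (\<not> R1 \<omega>) * (ee (1,b2) j \<omega> * ee (1,b2) k \<omega>) \<partial>M) / q) *v ?v)
     \<le> ?v \<bullet> ((\<chi> j k. (\<integral>\<omega>. ee (1,b2) j \<omega> * ee (1,b2) k \<omega> \<partial>M)) *v ?v)"
    using loewner unfolding loewner_le_def eY ind q_def by blast
  then have "(\<Sum>j\<in>UNIV. \<Sum>k\<in>UNIV. (\<integral>\<omega>. rI (\<not> R1 \<omega>) * (ee (1,b2) j \<omega> * ee (1,b2) k \<omega>) \<partial>M) / q)
     \<le> (\<Sum>j\<in>UNIV. \<Sum>k\<in>UNIV. (\<integral>\<omega>. 1 * (ee (1,b2) j \<omega> * ee (1,b2) k \<omega>) \<partial>M))"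
    by (simp add: inner_vec_def matrix_vector_mult_def)
  also have "\<dots> = (\<integral>\<omega>. 1 * (Se (1,b2) \<omega>)\<^sup>2 \<partial>M)"
    by (rule ESe_gen[OF d, symmetric]) auto
  finally have le: "(\<integral>\<omega>. rI (\<not> R1 \<omega>) * (Se (1,b2) \<omega>)\<^sup>2 \<partial>M) / q \<le> (\<integral>\<omega>. (Se (1,b2) \<omega>)\<^sup>2 \<partial>M)"
    using ESe_gen[OF d, of "\<lambda>\<omega>. rI (\<not> R1 \<omega>)"] g1
    by (simp add: sum_divide_distrib[symmetric] abs_le_iff)
  have q0: "0 \<le> q" unfolding q_def by simp
  show ?thesis
  proof (cases "q = 0")
    case True
    have null: "{\<omega>\<in>space M. \<not> R1 \<omega>} \<in> null_sets M"
      using True unfolding q_def by (intro null_setsI) (auto simp: emeasure_eq_measure)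
    have "AE \<omega> in M. \<omega> \<notin> {\<omega>\<in>space M. \<not> R1 \<omega>}" by (rule AE_not_in[OF null])
    then have "AE \<omega> in M. rI (\<not> R1 \<omega>) * (Se (1,b2) \<omega>)\<^sup>2 = 0"
      using AE_space by eventually_elim (auto simp: rI_def)
    then have "(\<integral>\<omega>. rI (\<not> R1 \<omega>) * (Se (1,b2) \<omega>)\<^sup>2 \<partial>M) = (\<integral>\<omega>. 0 \<partial>M)"
      using dD[OF d] by (intro integral_cong_AE) auto
    then show ?thesis using True q by simp
  next
    case False
    then have "0 < q" using q0 by simp
    then show ?thesis using le q by (simp add: divide_le_eq mult.commute)
  qed
qed


lemma ESe_K: assumes d: "d \<in> {(1, b2), (-1, 0)}" and sig: "0 < \<sigma>2"
  shows "(\<integral>\<omega>. (Se d \<omega>)\<^sup>2 \<partial>M) = (real CARD('m))\<^sup>2 * (\<sigma>2 * (1 - \<eta>\<^sup>2 * EX2 / \<sigma>2)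
     * (1 + (real CARD('m) - 1) * ((\<rho> - \<eta>\<^sup>2 * EX2 / \<sigma>2) / (1 - \<eta>\<^sup>2 * EX2 / \<sigma>2))) / real CARD('m))"
proof -
  define m where "m = real CARD('m)"
  define c where "c = \<eta>\<^sup>2 * EX2 / \<sigma>2"
  have m0: "0 < m" unfolding m_def by simp
  have E: "(\<integral>\<omega>. (Se d \<omega>)\<^sup>2 \<partial>M) = \<sigma>2 * m * (1 + (m - 1) * \<rho>) - m\<^sup>2 * \<eta>\<^sup>2 * EX2"
    unfolding m_def by (rule ESe[OF d])
  have etaE: "\<eta>\<^sup>2 * EX2 = c * \<sigma>2" unfolding c_def using sig by simp
  show ?thesis
  proof (cases "c = 1")
    case False
    then have "1 - c \<noteq> 0" by simp
    have E': "(\<integral>\<omega>. (Se d \<omega>)\<^sup>2 \<partial>M) = \<sigma>2 * m * (1 + (m - 1) * \<rho>) - m\<^sup>2 * (c * \<sigma>2)"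
      using E etaE by (simp add: mult.assoc)
    show ?thesis unfolding E' m_def[symmetric] c_def[symmetric] using m0 sig \<open>1 - c \<noteq> 0\<close>
      by (simp add: field_simps power2_eq_square)
  next
    case True
    have "\<sigma>2 * m * (1 + (m - 1) * \<rho>) - m\<^sup>2 * \<eta>\<^sup>2 * EX2 = \<sigma>2 * m * (m - 1) * (\<rho> - 1)"
      using etaE True by (simp add: power2_eq_square algebra_simps)
    moreover have "(m - 1) * (\<rho> - 1) = 0"
    proof (cases "CARD('m) = 1")
      case True then show ?thesis unfolding m_def by simp
    next
      case False
      have "\<exists>j k::'m. j \<noteq> k"
      proof (rule ccontr)
        assume "\<not> (\<exists>j k::'m. j \<noteq> k)"
        then have "(UNIV :: 'm set) = {undefined}" by auto
        then have "CARD('m) = 1" by (simp add: card_1_singleton_iff) blast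
        then show False using False by simp
      qed
      then obtain j k :: 'm where jk: "j \<noteq> k" by blast
      have i: "integrable M (\<lambda>\<omega>. ee d j \<omega> * ee d j \<omega>)" "integrable M (\<lambda>\<omega>. ee d j \<omega> * ee d k \<omega>)"
        "integrable M (\<lambda>\<omega>. ee d k \<omega> * ee d k \<omega>)" by (rule ee_prod_int[OF d])+
      have "0 \<le> (\<integral>\<omega>. (ee d j \<omega> - ee d k \<omega>)\<^sup>2 \<partial>M)" by simp
      also have "(\<integral>\<omega>. (ee d j \<omega> - ee d k \<omega>)\<^sup>2 \<partial>M) =
          (\<integral>\<omega>. ee d j \<omega> * ee d j \<omega> - 2 * (ee d j \<omega> * ee d k \<omega>) + ee d k \<omega> * ee d k \<omega> \<partial>M)"
        by (rule Bochner_Integration.integral_cong) (simp_all add: power2_eq_square algebra_simps)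
      also have "\<dots> = 2 * \<sigma>2 * (1 - \<rho>)"
        using i jk by (simp add: Eee[OF d] exch_def algebra_simps)
      finally have r1: "\<rho> \<le> 1" using sig by (simp add: zero_le_mult_iff)
      have "0 \<le> (\<integral>\<omega>. (Se d \<omega>)\<^sup>2 \<partial>M)" by simp
      then have "0 \<le> \<sigma>2 * m * (m - 1) * (\<rho> - 1)"
        using E \<open>\<sigma>2 * m * (1 + (m - 1) * \<rho>) - m\<^sup>2 * \<eta>\<^sup>2 * EX2 = \<sigma>2 * m * (m - 1) * (\<rho> - 1)\<close> by simp
      moreover have "1 < m"
      proof -
        have "0 < CARD('m)" by simp
        then have "1 < CARD('m)" using False by linarith
        then show ?thesis unfolding m_def by simp
      qed
      ultimately have "0 \<le> \<rho> - 1"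
      proof -
        assume a: "0 \<le> \<sigma>2 * m * (m - 1) * (\<rho> - 1)" and b: "1 < m"
        have p: "0 < \<sigma>2 * m * (m - 1)" using sig m0 b by simp
        show ?thesis using a p by (simp add: zero_le_mult_iff)
      qed
      then show ?thesis using r1 by simp
    qed
    ultimately have "(\<integral>\<omega>. (Se d \<omega>)\<^sup>2 \<partial>M) = 0" using E by simp
    then show ?thesis using True unfolding m_def[symmetric] c_def[symmetric] by simp
  qed
qed


lemma tau_gen:
  fixes V :: "real^'m^'m" and Y :: "'a \<Rightarrow> real^'m"
  assumes colsum: "\<And>k. (\<Sum>j\<in>UNIV. matrix_inv V $ j $ k) = cst" and cst: "cst \<noteq> 0"
    and EX2: "0 < EX2"
    and d: "d \<in> {(1, b2), (-1, 0)}"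
    and cons_Y: "\<forall>\<omega>\<in>space M. \<forall>d\<in>dtrs. consistent d (A1 \<omega>) (R \<omega>) (A2 \<omega>) \<longrightarrow> Y \<omega> = Yp d \<omega>"
    and th1: "\<theta> $ pidx d = \<beta> d" and th2: "\<theta> $ eta_idx = \<eta>"
  shows "sandwich_tau2 M V \<theta> A1 R A2 X Y d = (\<integral>\<omega>. (CD d \<omega>)\<^sup>2 * (Sf d (Z1 \<omega>))\<^sup>2 \<partial>M) / (real CARD('m))\<^sup>2"
proof -
  define jd where "jd k = real CARD('m) * cst * (if k = eta_idx then 3 * EX2 else 1)" for k
  have nz: "jd k \<noteq> 0" for k unfolding jd_def using cst EX2 by simp
  have "sandwich_tau2 M V \<theta> A1 R A2 X Y d =
     (\<integral>\<omega>. est_fun V \<theta> (A1 \<omega>) (R \<omega>) (A2 \<omega>) (X \<omega>) (Y \<omega>) $ pidx d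
             * est_fun V \<theta> (A1 \<omega>) (R \<omega>) (A2 \<omega>) (X \<omega>) (Y \<omega>) $ pidx d \<partial>M) / (jd (pidx d))\<^sup>2"
    unfolding sandwich_tau2_def Let_def J_eq[OF colsum] jd_def[symmetric]
    by (subst sandwich_diag[OF nz]) simp
  also have "\<dots> = cst\<^sup>2 * (\<integral>\<omega>. (CD d \<omega>)\<^sup>2 * (Sf d (Z1 \<omega>))\<^sup>2 \<partial>M) / (real CARD('m) * cst)\<^sup>2"
    by (simp add: A_entry[OF colsum d cons_Y th1 th2] jd_def pidx_ne_eta)
  also have "\<dots> = (\<integral>\<omega>. (CD d \<omega>)\<^sup>2 * (Sf d (Z1 \<omega>))\<^sup>2 \<partial>M) / (real CARD('m))\<^sup>2"
    using cst by (simp add: power_mult_distrib)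
  finally show ?thesis .
qed

end


theorem mainTheorem6:
  fixes M :: "'a measure"
    and X :: "'a \<Rightarrow> real"
    and A1 A2 :: "'a \<Rightarrow> int"
    and R R1 :: "'a \<Rightarrow> bool"
    and Y :: "'a \<Rightarrow> real^'m"
    and Yp :: "int \<times> int \<Rightarrow> 'a \<Rightarrow> real^'m"
    and \<beta> :: "int \<times> int \<Rightarrow> real"
    and \<eta> \<sigma>2 \<rho> s2 r :: real
    and b2 :: int
    and \<theta> :: "real^4"
  assumes P: "prob_space M"
    and meas_X: "X \<in> borel_measurable M"
    and meas_A1: "A1 \<in> measurable M (count_space UNIV)"
    and meas_A2: "A2 \<in> measurable M (count_space UNIV)"
    and meas_R: "R \<in> measurable M (count_space UNIV)"
    and meas_R1: "R1 \<in> measurable M (count_space UNIV)"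
    and meas_Y: "Y \<in> borel_measurable M"
    and meas_Yp: "\<And>d. d \<in> dtrs \<Longrightarrow> Yp d \<in> borel_measurable M"
    \<comment> \<open>design: stage-1 and stage-2 randomization\<close>
    and A1_vals: "\<forall>\<omega>\<in>space M. A1 \<omega> = 1 \<or> A1 \<omega> = -1"
    and A1_prob: "measure M {\<omega>\<in>space M. A1 \<omega> = 1} = 1/2"
    and A2_vals: "\<forall>\<omega>\<in>space M. A2 \<omega> = 1 \<or> A2 \<omega> = -1"
    and A2_prob: "measure M {\<omega>\<in>space M. A2 \<omega> = 1} = 1/2"
    and A1_indep: "indep_rv M (count_space UNIV) A1
                     (borel \<Otimes>\<^sub>M count_space UNIV \<Otimes>\<^sub>M pot_space)
                     (\<lambda>\<omega>. (X \<omega>, R1 \<omega>, (\<lambda>d\<in>dtrs. Yp d \<omega>)))"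
    and A2_indep: "indep_rv M (count_space UNIV) A2
                     (count_space UNIV \<Otimes>\<^sub>M borel \<Otimes>\<^sub>M count_space UNIV \<Otimes>\<^sub>M pot_space)
                     (\<lambda>\<omega>. (A1 \<omega>, X \<omega>, R1 \<omega>, (\<lambda>d\<in>dtrs. Yp d \<omega>)))"
    \<comment> \<open>(a) consistency\<close>
    and cons_R: "\<forall>\<omega>\<in>space M. A1 \<omega> = 1 \<longrightarrow> R \<omega> = R1 \<omega>"
    and cons_Y: "\<forall>\<omega>\<in>space M. \<forall>d\<in>dtrs. consistent d (A1 \<omega>) (R \<omega>) (A2 \<omega>) \<longrightarrow> Y \<omega> = Yp d \<omega>"
    \<comment> \<open>fixed b2 and the covariate\<close>
    and b2: "b2 = 1 \<or> b2 = -1"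
    and X_sq_int: "integrable M (\<lambda>\<omega>. (X \<omega>)\<^sup>2)"
    and X_mean: "(\<integral>\<omega>. X \<omega> \<partial>M) = 0"
    and X_var_pos: "0 < prob_space.variance M X"
    \<comment> \<open>(b) correct mean model\<close>
    and mean_model: "\<And>d j. d \<in> {(1, b2), (-1, 0)} \<Longrightarrow>
        AE \<omega> in M. real_cond_exp M (vimage_algebra (space M) X borel) (\<lambda>\<omega>. Yp d \<omega> $ j) \<omega>
                    = \<beta> d + \<eta> * X \<omega>"
    \<comment> \<open>(c) exchangeable covariance\<close>
    and Y_sq_int: "\<And>d j. d \<in> {(1, b2), (-1, 0)} \<Longrightarrow> integrable M (\<lambda>\<omega>. (Yp d \<omega> $ j)\<^sup>2)"
    and sigma_pos: "0 < \<sigma>2"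
    and cov: "\<And>d j k. d \<in> {(1, b2), (-1, 0)} \<Longrightarrow>
        (\<integral>\<omega>. (Yp d \<omega> $ j - (\<integral>\<omega>'. Yp d \<omega>' $ j \<partial>M))
             * (Yp d \<omega> $ k - (\<integral>\<omega>'. Yp d \<omega>' $ k \<partial>M)) \<partial>M) = \<sigma>2 * (exch \<rho> :: real^'m^'m) $ j $ k"
    \<comment> \<open>(d) Loewner condition on the residual second moment given non-response\<close>
    and loewner: "loewner_le
        (\<chi> j k. (\<integral>\<omega>. indicator {\<omega>. \<not> R1 \<omega>} \<omega>
                    * ((Yp (1, b2) \<omega> - (\<beta> (1, b2) + \<eta> * X \<omega>) *\<^sub>R (\<chi> i. 1)) $ j
                       * (Yp (1, b2) \<omega> - (\<beta> (1, b2) + \<eta> * X \<omega>) *\<^sub>R (\<chi> i. 1)) $ k) \<partial>M)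
                 / measure M {\<omega>\<in>space M. \<not> R1 \<omega>})
        (\<chi> j k. (\<integral>\<omega>. (Yp (1, b2) \<omega> - (\<beta> (1, b2) + \<eta> * X \<omega>) *\<^sub>R (\<chi> i. 1)) $ j
                       * (Yp (1, b2) \<omega> - (\<beta> (1, b2) + \<eta> * X \<omega>) *\<^sub>R (\<chi> i. 1)) $ k \<partial>M))"
    \<comment> \<open>working covariance V = s2 Exch_m(r), positive definite\<close>
    and s2_pos: "0 < s2"
    and V_pd: "\<forall>v::real^'m. v \<noteq> 0 \<longrightarrow> 0 < v \<bullet> (exch r *v v)"
    \<comment> \<open>parameter vector at which the sandwich is evaluated (true values)\<close>
    and theta_1: "\<theta> $ pidx (1, b2) = \<beta> (1, b2)"
    and theta_m1: "\<theta> $ pidx (-1, 0) = \<beta> (-1, 0)"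
    and theta_eta: "\<theta> $ eta_idx = \<eta>"
  defines "m \<equiv> real CARD('m)"
    and "c \<equiv> \<eta>\<^sup>2 * prob_space.variance M X / \<sigma>2"
    and "\<rho>s \<equiv> (\<rho> - \<eta>\<^sup>2 * prob_space.variance M X / \<sigma>2) / (1 - \<eta>\<^sup>2 * prob_space.variance M X / \<sigma>2)"
    and "p1 \<equiv> measure M {\<omega>\<in>space M. A1 \<omega> = 1 \<and> R \<omega>} / measure M {\<omega>\<in>space M. A1 \<omega> = 1}"
    and "\<tau>1 \<equiv> sandwich_tau2 M (s2 *\<^sub>R exch r) \<theta> A1 R A2 X Y (1, b2)"
    and "\<tau>0 \<equiv> sandwich_tau2 M (s2 *\<^sub>R exch r) \<theta> A1 R A2 X Y (-1, 0)"
  shows "\<tau>1 \<le> 2 * (2 - p1) * \<sigma>2 * (1 - c) * (1 + (m - 1) * \<rho>s) / m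
       \<and> \<tau>0 = 2 * \<sigma>2 * (1 - c) * (1 + (m - 1) * \<rho>s) / m
       \<and> (\<forall>\<delta> \<alpha> \<beta>'. 0 < \<delta> \<longrightarrow> 0 < \<alpha> \<longrightarrow> \<alpha> < 1 \<longrightarrow> 0 < \<beta>' \<longrightarrow> \<beta>' < 1 \<longrightarrow>
            (z_upper \<beta>' + z_upper (\<alpha> / 2))\<^sup>2 * (\<tau>1 + \<tau>0) / (\<delta>\<^sup>2 * \<sigma>2)
            \<le> 4 * (z_upper \<beta>' + z_upper (\<alpha> / 2))\<^sup>2 / (m * \<delta>\<^sup>2)
               * (1 + (m - 1) * \<rho>s) * (1 + (1 - p1) / 2) * (1 - c))"
proof -
  interpret A: adept2 M X A1 A2 R R1 Yp \<beta> \<eta> \<sigma>2 \<rho> b2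
    apply (intro adept2.intro adept.intro adept_axioms.intro adept2_axioms.intro)
    by (rule P meas_X meas_A1 meas_A2 meas_R meas_R1 A1_vals A1_prob A2_vals A2_prob A1_indep A2_indep cons_R
      meas_Yp b2 X_sq_int X_mean mean_model Y_sq_int cov; assumption)+
  define lam where "lam = s2 * (1 + (real CARD('m) - 1) * r)"
  have lam: "0 < lam" and colsum: "\<And>k. (\<Sum>j\<in>UNIV. matrix_inv (s2 *\<^sub>R exch r :: real^'m^'m) $ j $ k) = 1 / lam"
    using V_facts[OF s2_pos V_pd] unfolding lam_def by auto
  have cst: "1 / lam \<noteq> 0" using lam by simp
  have var: "prob_space.variance M X = A.EX2"
    using X_mean by (simp add: A.EX2_def)
  have EX2: "0 < A.EX2" using X_var_pos var by simp
  have m0: "0 < m" unfolding m_def by simp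
  define K where "K = \<sigma>2 * (1 - c) * (1 + (m - 1) * \<rho>s) / m"
  have ESe: "(\<integral>\<omega>. (A.Se d \<omega>)\<^sup>2 \<partial>M) = m\<^sup>2 * K" if d: "d \<in> {(1, b2), (-1, 0)}" for d
    using A.ESe_K[OF d sigma_pos] unfolding K_def m_def c_def \<rho>s_def var by simp
  have d1: "(1, b2) \<in> {(1, b2), (-1::int, 0::int)}" and d0: "(-1, 0) \<in> {(1, b2), (-1::int, 0::int)}" by auto
  have t1: "\<tau>1 = (2 * (m\<^sup>2 * K) + 2 * (\<integral>\<omega>. A.rI (\<not> R1 \<omega>) * (A.Se (1,b2) \<omega>)\<^sup>2 \<partial>M)) / m\<^sup>2"
    unfolding \<tau>1_def
    by (subst A.tau_gen[OF colsum cst EX2 d1 cons_Y theta_1 theta_eta])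
       (simp add: A.tau_pos ESe[OF d1] m_def)
  have t0: "\<tau>0 = 2 * K"
    unfolding \<tau>0_def
    by (subst A.tau_gen[OF colsum cst EX2 d0 cons_Y theta_m1 theta_eta])
       (use m0 in \<open>simp add: A.tau_neg[OF colsum] ESe[OF d0] flip: m_def\<close>)
  have p1: "p1 = measure M {\<omega>\<in>space M. R1 \<omega>}" unfolding p1_def by (rule A.p1_eq)
  have I: "(\<integral>\<omega>. A.rI (\<not> R1 \<omega>) * (A.Se (1,b2) \<omega>)\<^sup>2 \<partial>M) \<le> (1 - p1) * (m\<^sup>2 * K)"
    using A.loew[OF loewner] ESe[OF d1] p1 by simp
  have T1: "\<tau>1 \<le> 2 * (2 - p1) * K"
  proof -
    have "\<tau>1 \<le> (2 * (m\<^sup>2 * K) + 2 * ((1 - p1) * (m\<^sup>2 * K))) / m\<^sup>2"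
      unfolding t1 using I m0 by (intro divide_right_mono) auto
    also have "\<dots> = 2 * (2 - p1) * K" using m0 by (simp add: field_simps power2_eq_square)
    finally show ?thesis .
  qed
  have K2: "2 * (2 - p1) * K = 2 * (2 - p1) * \<sigma>2 * (1 - c) * (1 + (m - 1) * \<rho>s) / m"
    unfolding K_def by simp
  show ?thesis
  proof (intro conjI allI impI)
    show "\<tau>1 \<le> 2 * (2 - p1) * \<sigma>2 * (1 - c) * (1 + (m - 1) * \<rho>s) / m" using T1 K2 by simp
    show "\<tau>0 = 2 * \<sigma>2 * (1 - c) * (1 + (m - 1) * \<rho>s) / m" using t0 unfolding K_def by simp
    fix \<delta> \<alpha> \<beta>' :: real
    assume \<delta>: "0 < \<delta>"
    define z where "z = (z_upper \<beta>' + z_upper (\<alpha> / 2))\<^sup>2"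
    have z0: "0 \<le> z" unfolding z_def by simp
    have e: "2 * (3 - p1) * K = 2 * (2 - p1) * K + 2 * K" by (simp add: algebra_simps)
    have s: "\<tau>1 + \<tau>0 \<le> 2 * (3 - p1) * K" using T1 t0 e by linarith
    have "z * (\<tau>1 + \<tau>0) / (\<delta>\<^sup>2 * \<sigma>2) \<le> z * (2 * (3 - p1) * K) / (\<delta>\<^sup>2 * \<sigma>2)"
      using s z0 \<delta> sigma_pos by (intro divide_right_mono mult_left_mono) auto
    also have "\<dots> = 4 * z / (m * \<delta>\<^sup>2) * (1 + (m - 1) * \<rho>s) * (1 + (1 - p1) / 2) * (1 - c)"
      unfolding K_def using \<delta> sigma_pos m0 by (simp add: field_simps)
    finally show "(z_upper \<beta>' + z_upper (\<alpha> / 2))\<^sup>2 * (\<tau>1 + \<tau>0) / (\<delta>\<^sup>2 * \<sigma>2)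
            \<le> 4 * (z_upper \<beta>' + z_upper (\<alpha> / 2))\<^sup>2 / (m * \<delta>\<^sup>2)
               * (1 + (m - 1) * \<rho>s) * (1 + (1 - p1) / 2) * (1 - c)" unfolding z_def .
  qed
qed


end
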